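(* Let $\Omega\subset\mathbb{R}^N$ be a bounded domain with smooth boundary and outward unit normal $\nu$. Let $w,w_*\in C^2(\overline\Omega)$ be positive functions, and let $a\in C^1(\overline\Omega)$ and $c\in C^2(\overline\Omega)$ be nonnegative functions. (i) Let $\beta\ge1$ be a constant and let $g\in C^{0,1}(\partial\Omega\times[0,\infty))$ be such that for every $x\in\partial\Omega$ the function $u\mapsto g(x,u)/(c(x)u)$ is nonincreasing on $[0,\infty)$. If $\frac{\partial(c w)}{\partial\nu}=g(x,w)$ and $\frac{\partial(c w_* )}{\partial\nu}=g(x,w_* )$ on $\partial\Omega$, then $$\int_\Omega\frac{c w_*[w^\beta-w_*^\beta]}{w^\beta}\Big({\rm div}\{a\nabla(cw)\}-\frac{w}{w_*}{\rm div}\{a\nabla(cw_* )\}\Big)dx\le-\int_\Omega\beta a c^2w^2\Big(\frac{w_*}{w}\Big)^{\beta-1}\Big|\nabla\frac{w_*}{w}\Big|^2dx\le0.$$ (ii) Let $\Phi\in C^{2,2}(\overline\Omega\times[0,\infty))$ satisfy $\Phi(x,0)=0$ and $\Phi_u(x,u)>0$ for $x\in\overline\Omega$, $u>0$, and let $g\in C^{0,1}(\partial\Omega\times[0,\infty))$ be such that for every $x\in\partial\Omega$ the function $u\mapsto g(x,u)/\Phi(x,u)$ is nonincreasing on $[0,\infty)$. If $\frac{\partial\Phi(x,w)}{\partial\nu}=g(x,w)$ and $\frac{\partial\Phi(x,w_* )}{\partial\nu}=g(x,w_* )$ on $\partial\Omega$, then $$\int_\Omega\frac{\Phi(x,w_*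 )[\Phi(x,w)-\Phi(x,w_* )]}{\Phi(x,w)}\Big({\rm div}[a\nabla\Phi(x,w)]-\frac{\Phi(x,w)}{\Phi(x,w_* )}{\rm div}[a\nabla\Phi(x,w_* )]\Big)dx\le-\int_\Omega a[\Phi(x,w)]^2\Big|\nabla\frac{\Phi(x,w_* )}{\Phi(x,w)}\Big|^2dx\le0.$$
   Context: Here $\Phi(x,w)$ denotes the function $x\mapsto\Phi(x,w(x))$, and $\partial/\partial\nu$ is the outward normal derivative on $\partial\Omega$. *)

theory Defs
  imports "HOL-Analysis.Analysis"
begin

definition grad :: "('a::euclidean_space \<Rightarrow> real) \<Rightarrow> 'a \<Rightarrow> 'a" where
  "grad f x = (\<Sum>i\<in>Basis. frechet_derivative f (at x) i *\<^sub>R i)"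

definition div_field :: "('a::euclidean_space \<Rightarrow> 'a) \<Rightarrow> 'a \<Rightarrow> real" where
  "div_field F x = (\<Sum>i\<in>Basis. frechet_derivative F (at x) i \<bullet> i)"

fun Ck_on :: "nat \<Rightarrow> 'a::euclidean_space set \<Rightarrow> ('a \<Rightarrow> real) \<Rightarrow> bool" where
  "Ck_on 0 U f = continuous_on U f"
| "Ck_on (Suc k) U f = (continuous_on U f \<and> f differentiable_on U \<and>
      (\<forall>v. Ck_on k U (\<lambda>x. frechet_derivative f (at x) v)))"

definition smooth_on :: "'a::euclidean_space set \<Rightarrow> ('a \<Rightarrow> real) \<Rightarrow> bool" where
  "smooth_on U f \<longleftrightarrow> (\<forall>k. Ck_on k U f)"

text \<open>f \<in> C^k(closure S): f is C^k on some open neighbourhood of S.\<close>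
definition Ck_closure :: "nat \<Rightarrow> 'a::euclidean_space set \<Rightarrow> ('a \<Rightarrow> real) \<Rightarrow> bool" where
  "Ck_closure k S f \<longleftrightarrow> (\<exists>U. open U \<and> S \<subseteq> U \<and> Ck_on k U f)"

definition defining_function :: "'a::euclidean_space set \<Rightarrow> ('a \<Rightarrow> real) \<Rightarrow> bool" where
  "defining_function \<Omega> \<rho> \<longleftrightarrow> smooth_on UNIV \<rho> \<and> \<Omega> = {x. \<rho> x < 0} \<and>
      (\<forall>x\<in>frontier \<Omega>. \<rho> x = 0 \<and> grad \<rho> x \<noteq> 0)"

definition smooth_bounded_domain :: "'a::euclidean_space set \<Rightarrow> bool" where
  "smooth_bounded_domain \<Omega> \<longleftrightarrow> open \<Omega> \<and> connected \<Omega> \<and> \<Omega> \<noteq> {} \<and> bounded \<Omega> \<and>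
      (\<exists>\<rho>. defining_function \<Omega> \<rho>)"

text \<open>Outward unit normal (independent of the choice of defining function).\<close>
definition outward_normal :: "'a::euclidean_space set \<Rightarrow> 'a \<Rightarrow> 'a" where
  "outward_normal \<Omega> x = (let \<rho> = (SOME \<rho>. defining_function \<Omega> \<rho>) in
      grad \<rho> x /\<^sub>R norm (grad \<rho> x))"

definition normal_deriv :: "'a::euclidean_space set \<Rightarrow> ('a \<Rightarrow> real) \<Rightarrow> 'a \<Rightarrow> real" where
  "normal_deriv \<Omega> f x = frechet_derivative f (at x) (outward_normal \<Omega> x)"

text \<open>g \<in> C^{0,1}(\<partial>\<Omega> \<times> [0,\<infinity>)): jointly continuous, locally Lipschitz in u
  (locally uniformly in x).\<close>
definition C01_boundary :: "'a::euclidean_space set \<Rightarrow> ('a \<Rightarrow> real \<Rightarrow> real) \<Rightarrow> bool" where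
  "C01_boundary B g \<longleftrightarrow> continuous_on (B \<times> {0..}) (\<lambda>(x,u). g x u) \<and> local_lipschitz B {0..} g"

text \<open>\<Phi> \<in> C^{2,2}(closure \<Omega> \<times> [0,\<infinity>)): jointly C^2 on a neighbourhood.\<close>
definition C22_closure :: "'a::euclidean_space set \<Rightarrow> ('a \<Rightarrow> real \<Rightarrow> real) \<Rightarrow> bool" where
  "C22_closure S \<Phi> \<longleftrightarrow> (\<exists>U. open U \<and> S \<times> {0..} \<subseteq> U \<and> Ck_on 2 U (\<lambda>(x,u). \<Phi> x u))"

end

theory Submission
  imports Defs
begin



lemma cont_integrable_sub:
  fixes f :: "'a::euclidean_space \<Rightarrow> real"
  assumes "compact S" "continuous_on S f" "T \<subseteq> S" "T \<in> sets lebesgue"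
  shows "f integrable_on T"
proof -
  have "integrable lborel (\<lambda>x. indicator S x *\<^sub>R f x)"
    using borel_integrable_compact[OF assms(1,2)] .
  hence "set_integrable lborel S f" unfolding set_integrable_def .
  hence "f absolutely_integrable_on S"
    by (meson absolutely_integrable_on_def set_borel_integral_eq_integral(1) set_integrable_norm)
  hence "f absolutely_integrable_on T"
    using set_integrable_subset assms(3,4) by blast
  thus ?thesis using set_lebesgue_integral_eq_integral(1) by blast
qed

lemma ibp_zero:
  fixes g :: "'a::euclidean_space \<Rightarrow> real"
  assumes der: "\<And>x. (g has_derivative g' x) (at x)" and cont: "continuous_on UNIV (\<lambda>x. g' x v)"
    and K: "compact K" and supp: "\<And>x. x \<notin> K \<Longrightarrow> g x = 0"
  shows "((\<lambda>x. g' x v) has_integral 0) UNIV"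
proof -
  let ?G = "\<lambda>x. g' x v"
  have lin: "linear (g' x)" for x using der[of x] by (rule has_derivative_linear)
  have Gz: "?G x = 0" if "x \<notin> K" for x
  proof -
    have "(g has_derivative (\<lambda>h. 0)) (at x)"
    proof (rule has_derivative_transform_within_open[where f="\<lambda>x. 0" and s="-K"])
      show "((\<lambda>x. 0) has_derivative (\<lambda>h. 0)) (at x)" by simp
      show "open (-K)" using K compact_imp_closed by blast
      show "x \<in> -K" using \<open>x \<notin> K\<close> by simp
      show "\<And>y. y \<in> -K \<Longrightarrow> 0 = g y" using supp by simp
    qed
    hence "g' x = (\<lambda>h. 0)" using der[of x] by (rule has_derivative_unique[rotated])
    thus ?thesis by simp
  qed
  obtain R where R0: "\<forall>x\<in>K. norm x \<le> R"
    using compact_imp_bounded[OF K] unfolding bounded_iff by blast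
  have R: "K \<subseteq> cball 0 R" using R0 by auto
  define R1 where "R1 = R + norm v"
  define S2 where "S2 = cball (0::'a) (R1 + norm v)"
  obtain a where a: "cball (0::'a) R1 \<subseteq> cbox (-a) a"
    by (rule bounded_subset_cbox_symmetric[OF bounded_cball])
  let ?B = "cbox (-a) a"
  have gcont: "continuous_on UNIV g"
    using has_derivative_continuous[OF der] by (simp add: continuous_at_imp_continuous_on)
  have outK: "y \<notin> K" if "x \<notin> cball 0 R1" "norm (y - x) \<le> norm v" for x y
  proof
    assume "y \<in> K"
    hence "norm y \<le> R" using R by auto
    moreover have "norm x > R + norm v" using that(1) unfolding R1_def by auto
    moreover have "norm x \<le> norm y + norm (y - x)" using norm_triangle_sub[of x y] norm_minus_commute[of x y] by simp
    ultimately show False using that(2) by linarith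
  qed
  have "cball 0 R \<subseteq> cball (0::'a) R1" unfolding R1_def by (intro subset_cball) simp
  hence KB: "K \<subseteq> ?B" using R a by (meson order_trans)
  have Gint: "(?G has_integral integral ?B ?G) ?B"
    using integrable_integral[OF integrable_continuous[OF continuous_on_subset[OF cont subset_UNIV]]] .
  have GU: "(?G has_integral integral ?B ?G) UNIV"
    by (rule has_integral_on_superset[OF Gint]) (use Gz KB in auto)
  have gint: "(g has_integral integral ?B g) ?B"
    using integrable_integral[OF integrable_continuous[OF continuous_on_subset[OF gcont subset_UNIV]]] .
  have gU: "(g has_integral integral ?B g) UNIV"
    by (rule has_integral_on_superset[OF gint]) (use supp KB in auto)
  define I where "I = integral ?B ?G"
  have bound: "\<bar>I\<bar> \<le> \<eta> * measure lborel ?B" if "\<eta> > 0" for \<eta>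
  proof -
    have "uniformly_continuous_on S2 ?G"
      unfolding S2_def by (rule compact_uniformly_continuous[OF continuous_on_subset[OF cont]]) auto
    then obtain d where d: "d > 0" "\<And>x y. x \<in> S2 \<Longrightarrow> y \<in> S2 \<Longrightarrow> dist y x < d \<Longrightarrow> dist (?G y) (?G x) < \<eta>"
      unfolding uniformly_continuous_on_def using \<open>\<eta> > 0\<close> by metis
    define t where "t = min 1 (d / (norm v + 1)) / 2"
    have t: "t > 0" "t \<le> 1" "t * norm v < d"
    proof -
      have "0 < d / (norm v + 1)" using d(1) by (intro divide_pos_pos) (auto intro: add_nonneg_pos)
      thus "t > 0" "t \<le> 1" unfolding t_def by auto
      have "t \<le> d / (norm v + 1) / 2" unfolding t_def by (intro divide_right_mono) auto
      hence "t * norm v \<le> d / (norm v + 1) / 2 * norm v"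
        by (rule mult_right_mono) simp
      also have "\<dots> < d"
      proof -
        have q0: "norm v + 1 > 0" using norm_ge_zero[of v] by linarith
        have q: "norm v / (norm v + 1) < 1" using q0 by (simp add: divide_less_eq)
        have e1: "d * (norm v / (norm v + 1)) < d" using mult_strict_left_mono[OF q d(1)] by simp
        define X where "X = d * (norm v / (norm v + 1))"
        have "d / (norm v + 1) / 2 * norm v = X / 2" unfolding X_def by simp
        moreover have "X < d" using e1 unfolding X_def .
        ultimately show ?thesis using d(1) by linarith
      qed
      finally show "t * norm v < d" .
    qed
    have sh: "((\<lambda>x. g (x + t *\<^sub>R v)) has_integral integral ?B g) UNIV"
    proof -
      have "((\<lambda>x. g (1 *\<^sub>R x + t *\<^sub>R v)) has_integral (1 / (\<bar>1\<bar> ^ DIM('a))) *\<^sub>R integral ?B g)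
          ((\<lambda>x. (1 / 1) *\<^sub>R x + -((1 / 1) *\<^sub>R (t *\<^sub>R v))) ` ?B)"
        by (rule has_integral_affinity[OF gint]) simp
      hence "((\<lambda>x. g (x + t *\<^sub>R v)) has_integral integral ?B g) ((\<lambda>x. x - t *\<^sub>R v) ` ?B)"
        by simp
      thus ?thesis
      proof (rule has_integral_on_superset)
        fix x assume x: "x \<notin> (\<lambda>x. x - t *\<^sub>R v) ` ?B"
        have "x + t *\<^sub>R v \<notin> ?B"
        proof
          assume "x + t *\<^sub>R v \<in> ?B"
          hence "(x + t *\<^sub>R v) - t *\<^sub>R v \<in> (\<lambda>x. x - t *\<^sub>R v) ` ?B" by (rule imageI)
          thus False using x by simp
        qed
        thus "g (x + t *\<^sub>R v) = 0" using KB supp by blast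
      qed simp
    qed
    define E where "E x = t * ?G x - (g (x + t *\<^sub>R v) - g x)" for x
    have EU: "(E has_integral t * I) UNIV"
      unfolding E_def I_def using has_integral_diff[OF has_integral_cmul[OF GU, of t] has_integral_diff[OF sh gU]]
      by simp
    have Ez: "E x = 0" if "x \<notin> cball 0 R1" for x
    proof -
      have "x \<notin> K" using outK[OF that, of x] by simp
      moreover have "t * norm v \<le> norm v" using t mult_left_le_one_le[of "norm v" t] by simp
      hence "x + t *\<^sub>R v \<notin> K" using outK[OF that, of "x + t *\<^sub>R v"] t by simp
      ultimately show ?thesis unfolding E_def using Gz supp by simp
    qed
    have EB: "(E has_integral t * I) ?B"
    proof -
      have "((\<lambda>x. if x \<in> ?B then E x else 0) has_integral t * I) UNIV"
        using EU
      proof (rule has_integral_cong[THEN iffD1, rotated])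
        fix x show "E x = (if x \<in> ?B then E x else 0)"
        proof (cases "x \<in> ?B")
          case False
          hence "x \<notin> cball 0 R1" using a by blast
          thus ?thesis using Ez False by simp
        qed simp
      qed
      thus ?thesis using has_integral_restrict_UNIV by blast
    qed
    have Ebd: "norm (E x) \<le> t * \<eta>" if "x \<in> ?B" for x
    proof (cases "x \<in> cball 0 R1")
      case False thus ?thesis using Ez[OF False] t \<open>\<eta>>0\<close> by simp
    next
      case True
      have "\<exists>s\<in>{0<..<t}. g (x + t *\<^sub>R v) - g (x + 0 *\<^sub>R v) = g' (x + s *\<^sub>R v) ((t - 0) *\<^sub>R v)"
      proof (rule mvt_simple[of 0 t "\<lambda>s. g (x + s *\<^sub>R v)" "\<lambda>s h. g' (x + s *\<^sub>R v) (h *\<^sub>R v)"])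
        show "0 < t" using t by simp
        fix s
        have "((\<lambda>s. x + s *\<^sub>R v) has_derivative (\<lambda>h. h *\<^sub>R v)) (at s within {0..t})"
          by (auto intro!: derivative_eq_intros)
        thus "((\<lambda>s. g (x + s *\<^sub>R v)) has_derivative (\<lambda>h. g' (x + s *\<^sub>R v) (h *\<^sub>R v))) (at s within {0..t})"
          using has_derivative_compose der by blast
      qed
      then obtain s where s: "0 < s" "s < t" "g (x + t *\<^sub>R v) - g x = t * ?G (x + s *\<^sub>R v)"
        using linear_cmul[OF lin] by auto
      have "E x = t * (?G x - ?G (x + s *\<^sub>R v))" unfolding E_def using s by (simp add: algebra_simps)
      moreover have "\<bar>?G (x + s *\<^sub>R v) - ?G x\<bar> < \<eta>"
      proof -
        have nx: "norm x \<le> R1" using True by simp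
        have nv: "norm v \<ge> 0" by simp
        have "norm x \<le> R1 + norm v" using nx nv by linarith
        hence xS: "x \<in> S2" unfolding S2_def by simp
        have ns: "norm (s *\<^sub>R v) \<le> t * norm v" using s by (simp add: mult_right_mono)
        have tv: "t * norm v \<le> norm v" using t mult_left_le_one_le[of "norm v" t] by simp
        have "norm (x + s *\<^sub>R v) \<le> norm x + norm (s *\<^sub>R v)" by (rule norm_triangle_ineq)
        hence "norm (x + s *\<^sub>R v) \<le> R1 + norm v" using nx ns tv by linarith
        hence "x + s *\<^sub>R v \<in> S2" unfolding S2_def by simp
        moreover have "dist (x + s *\<^sub>R v) x < d" using ns t by (simp add: dist_norm)
        ultimately show ?thesis using d(2)[OF xS] by (simp add: dist_real_def)
      qed
      ultimately show ?thesis using t \<open>\<eta>>0\<close> by (simp add: abs_mult abs_minus_commute mult_left_mono)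
    qed
    have "norm (t * I) \<le> (t * \<eta>) * measure lborel ?B"
      by (rule has_integral_bound[OF _ EB Ebd]) (use t \<open>\<eta>>0\<close> in auto)
    hence "t * \<bar>I\<bar> \<le> t * (\<eta> * measure lborel ?B)" using t by (simp add: abs_mult)
    thus ?thesis using t by simp
  qed
  have "I = 0"
  proof (rule ccontr)
    assume "I \<noteq> 0"
    define \<eta> where "\<eta> = \<bar>I\<bar> / (2 * (measure lborel ?B + 1))"
    have "\<eta> > 0" unfolding \<eta>_def using \<open>I \<noteq> 0\<close> by (simp add: add_nonneg_pos)
    hence "\<bar>I\<bar> \<le> \<eta> * measure lborel ?B" by (rule bound)
    also have "\<dots> < \<bar>I\<bar>"
    proof -
      define c where "c = measure lborel ?B"
      have c0: "c \<ge> 0" unfolding c_def by simp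
      have "\<bar>I\<bar> * c < \<bar>I\<bar> * (2 * (c + 1))" using c0 \<open>I \<noteq> 0\<close> by (intro mult_strict_left_mono) auto
      hence "\<bar>I\<bar> * c / (2 * (c + 1)) < \<bar>I\<bar>" using c0 by (simp add: divide_less_eq)
      thus ?thesis unfolding \<eta>_def c_def by simp
    qed
    finally show False by simp
  qed
  thus ?thesis using GU I_def by simp
qed



definition C1d :: "'a::real_normed_vector set \<Rightarrow> ('a \<Rightarrow> 'b::real_normed_vector) \<Rightarrow> ('a \<Rightarrow> 'a \<Rightarrow> 'b) \<Rightarrow> bool" where
  "C1d U f Df \<longleftrightarrow> (\<forall>x\<in>U. (f has_derivative Df x) (at x)) \<and> (\<forall>h. continuous_on U (\<lambda>x. Df x h))"

lemma C1dI: "(\<And>x. x \<in> U \<Longrightarrow> (f has_derivative Df x) (at x)) \<Longrightarrow> (\<And>h. continuous_on U (\<lambda>x. Df x h)) \<Longrightarrow> C1d U f Df"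
  unfolding C1d_def by blast

lemma C1d_der: "C1d U f Df \<Longrightarrow> x \<in> U \<Longrightarrow> (f has_derivative Df x) (at x)"
  unfolding C1d_def by blast

lemma C1d_dcont: "C1d U f Df \<Longrightarrow> continuous_on U (\<lambda>x. Df x h)"
  unfolding C1d_def by blast

lemma C1d_cont: "C1d U f Df \<Longrightarrow> continuous_on U f"
proof -
  assume a: "C1d U f Df"
  have "\<forall>x\<in>U. continuous (at x within U) f"
    using C1d_der[OF a] has_derivative_continuous has_derivative_at_withinI by blast
  thus ?thesis using continuous_on_eq_continuous_within by blast
qed

lemma C1d_lin: "C1d U f Df \<Longrightarrow> x \<in> U \<Longrightarrow> linear (Df x)"
  using C1d_der has_derivative_linear by blast

lemma C1d_subset: "C1d U f Df \<Longrightarrow> V \<subseteq> U \<Longrightarrow> C1d V f Df"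
  unfolding C1d_def using continuous_on_subset by blast

lemma C1d_const: "C1d U (\<lambda>x. c) (\<lambda>x h. 0)"
  by (rule C1dI) auto

lemma C1d_id_inner: "C1d U (\<lambda>x. x \<bullet> b) (\<lambda>x h. h \<bullet> b)"
  by (rule C1dI) (auto intro!: derivative_eq_intros)

lemma C1d_add:
  assumes "C1d U f Df" "C1d U g Dg"
  shows "C1d U (\<lambda>x. f x + g x) (\<lambda>x h. Df x h + Dg x h)"
proof (rule C1dI)
  fix x assume "x \<in> U"
  thus "((\<lambda>x. f x + g x) has_derivative (\<lambda>h. Df x h + Dg x h)) (at x)"
    using has_derivative_add[OF C1d_der[OF assms(1)] C1d_der[OF assms(2)]] by blast
next
  fix h show "continuous_on U (\<lambda>x. Df x h + Dg x h)"
    using continuous_on_add[OF C1d_dcont[OF assms(1)] C1d_dcont[OF assms(2)]] .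
qed

lemma C1d_diff:
  assumes "C1d U f Df" "C1d U g Dg"
  shows "C1d U (\<lambda>x. f x - g x) (\<lambda>x h. Df x h - Dg x h)"
proof (rule C1dI)
  fix x assume "x \<in> U"
  thus "((\<lambda>x. f x - g x) has_derivative (\<lambda>h. Df x h - Dg x h)) (at x)"
    using has_derivative_diff[OF C1d_der[OF assms(1)] C1d_der[OF assms(2)]] by blast
next
  fix h show "continuous_on U (\<lambda>x. Df x h - Dg x h)"
    using continuous_on_diff[OF C1d_dcont[OF assms(1)] C1d_dcont[OF assms(2)]] .
qed

lemma C1d_mult:
  fixes f g :: "'a::real_normed_vector \<Rightarrow> real"
  assumes "C1d U f Df" "C1d U g Dg"
  shows "C1d U (\<lambda>x. f x * g x) (\<lambda>x h. f x * Dg x h + Df x h * g x)"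
proof (rule C1dI)
  fix x assume "x \<in> U"
  thus "((\<lambda>x. f x * g x) has_derivative (\<lambda>h. f x * Dg x h + Df x h * g x)) (at x)"
    using has_derivative_mult[OF C1d_der[OF assms(1)] C1d_der[OF assms(2)]] by blast
next
  fix h show "continuous_on U (\<lambda>x. f x * Dg x h + Df x h * g x)"
    by (intro continuous_on_add continuous_on_mult C1d_dcont[OF assms(1)] C1d_dcont[OF assms(2)]
        C1d_cont[OF assms(1)] C1d_cont[OF assms(2)])
qed

lemma C1d_scaleR:
  fixes f :: "'a::real_normed_vector \<Rightarrow> real" and g :: "'a \<Rightarrow> 'b::real_normed_vector"
  assumes "C1d U f Df" "C1d U g Dg"
  shows "C1d U (\<lambda>x. f x *\<^sub>R g x) (\<lambda>x h. f x *\<^sub>R Dg x h + Df x h *\<^sub>R g x)"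
proof (rule C1dI)
  fix x assume "x \<in> U"
  thus "((\<lambda>x. f x *\<^sub>R g x) has_derivative (\<lambda>h. f x *\<^sub>R Dg x h + Df x h *\<^sub>R g x)) (at x)"
    using has_derivative_scaleR[OF C1d_der[OF assms(1)] C1d_der[OF assms(2)]] by blast
next
  fix h show "continuous_on U (\<lambda>x. f x *\<^sub>R Dg x h + Df x h *\<^sub>R g x)"
    by (intro continuous_on_add continuous_on_scaleR C1d_dcont[OF assms(1)] C1d_dcont[OF assms(2)]
        C1d_cont[OF assms(1)] C1d_cont[OF assms(2)])
qed

lemma C1d_inner:
  fixes g :: "'a::real_normed_vector \<Rightarrow> 'b::real_inner"
  assumes "C1d U g Dg"
  shows "C1d U (\<lambda>x. g x \<bullet> b) (\<lambda>x h. Dg x h \<bullet> b)"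
proof (rule C1dI)
  fix x assume "x \<in> U"
  thus "((\<lambda>x. g x \<bullet> b) has_derivative (\<lambda>h. Dg x h \<bullet> b)) (at x)"
    using bounded_linear.has_derivative[OF bounded_linear_inner_left C1d_der[OF assms]] by blast
next
  fix h show "continuous_on U (\<lambda>x. Dg x h \<bullet> b)"
    by (intro continuous_on_inner C1d_dcont[OF assms] continuous_on_const)
qed

lemma C1d_sum:
  assumes "finite I" "\<And>i. i \<in> I \<Longrightarrow> C1d U (f i) (Df i)"
  shows "C1d U (\<lambda>x. \<Sum>i\<in>I. f i x) (\<lambda>x h. \<Sum>i\<in>I. Df i x h)"
proof (rule C1dI)
  fix x assume "x \<in> U"
  thus "((\<lambda>x. \<Sum>i\<in>I. f i x) has_derivative (\<lambda>h. \<Sum>i\<in>I. Df i x h)) (at x)"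
    using has_derivative_sum[of I "\<lambda>i. f i" "\<lambda>i. Df i x"] C1d_der[OF assms(2)] by blast
next
  fix h show "continuous_on U (\<lambda>x. \<Sum>i\<in>I. Df i x h)"
    by (intro continuous_on_sum C1d_dcont[OF assms(2)])
qed

lemma C1d_cong:
  assumes "C1d U f Df" "open U" "\<And>x. x \<in> U \<Longrightarrow> f x = g x"
  shows "C1d U g Df"
proof (rule C1dI)
  fix x assume x: "x \<in> U"
  show "(g has_derivative Df x) (at x)"
    by (rule has_derivative_transform_within_open[OF C1d_der[OF assms(1) x] assms(2) x assms(3)])
next
  fix h show "continuous_on U (\<lambda>x. Df x h)" by (rule C1d_dcont[OF assms(1)])
qed

lemma C1d_dcong:
  assumes "C1d U f Df" "\<And>x h. x \<in> U \<Longrightarrow> Df x h = Df' x h"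
  shows "C1d U f Df'"
proof (rule C1dI)
  fix x assume x: "x \<in> U"
  have "Df x = Df' x" using assms(2)[OF x] by blast
  thus "(f has_derivative Df' x) (at x)" using C1d_der[OF assms(1) x] by simp
next
  fix h show "continuous_on U (\<lambda>x. Df' x h)"
    using continuous_on_cong[THEN iffD1, OF refl _ C1d_dcont[OF assms(1)]] assms(2) by metis
qed

lemma C1d_comp_real:
  fixes f :: "'a::real_normed_vector \<Rightarrow> real"
  assumes "C1d U f Df" "\<And>x. x \<in> U \<Longrightarrow> f x \<in> T" "open T"
    "\<And>y. y \<in> T \<Longrightarrow> (\<psi> has_real_derivative \<psi>' y) (at y)" "continuous_on T \<psi>'"
  shows "C1d U (\<lambda>x. \<psi> (f x)) (\<lambda>x h. \<psi>' (f x) * Df x h)"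
proof (rule C1dI)
  fix x assume x: "x \<in> U"
  have "(\<psi> has_derivative (\<lambda>h. \<psi>' (f x) * h)) (at (f x))"
    using assms(4)[OF assms(2)[OF x]] unfolding has_field_derivative_def .
  from has_derivative_compose[OF C1d_der[OF assms(1) x] this]
  show "((\<lambda>x. \<psi> (f x)) has_derivative (\<lambda>h. \<psi>' (f x) * Df x h)) (at x)" .
next
  fix h
  have "continuous_on U (\<lambda>x. \<psi>' (f x))"
    by (rule continuous_on_compose2[OF assms(5) C1d_cont[OF assms(1)]]) (use assms(2) in blast)
  thus "continuous_on U (\<lambda>x. \<psi>' (f x) * Df x h)"
    by (intro continuous_on_mult C1d_dcont[OF assms(1)])
qed



definition qf :: "real \<Rightarrow> real" where "qf t = (max 0 t)\<^sup>2"

lemma qf_deriv: "(qf has_real_derivative 2 * max 0 t) (at t)"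
proof -
  consider "t > 0" | "t < 0" | "t = 0" by linarith
  thus ?thesis
  proof cases
    case 1
    have "((\<lambda>z. z\<^sup>2) has_real_derivative 2 * t) (at t)"
      by (auto intro!: derivative_eq_intros)
    hence "(qf has_real_derivative 2 * t) (at t)"
      by (rule has_field_derivative_transform_within_open[where S="{0<..}"]) (use 1 in \<open>auto simp: qf_def\<close>)
    thus ?thesis using 1 by simp
  next
    case 2
    have "((\<lambda>z. 0) has_real_derivative 0) (at t)" by simp
    hence "(qf has_real_derivative 0) (at t)"
      by (rule has_field_derivative_transform_within_open[where S="{..<0}"]) (use 2 in \<open>auto simp: qf_def\<close>)
    thus ?thesis using 2 by simp
  next
    case 3
    have "((\<lambda>h. max 0 h) \<longlongrightarrow> max 0 0) (at (0::real))"
      by (intro tendsto_intros)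
    hence lim: "((\<lambda>h. max 0 h) \<longlongrightarrow> 0) (at (0::real))" by simp
    have ev: "\<forall>\<^sub>F h in at (0::real). max 0 h = (qf (0 + h) - qf 0) / h"
      unfolding eventually_at by (rule exI[of _ 1]) (auto simp: qf_def power2_eq_square max_def)
    have "((\<lambda>h. (qf (0 + h) - qf 0) / h) \<longlongrightarrow> 0) (at (0::real))"
      using tendsto_cong[OF ev] lim by blast
    thus ?thesis using 3 by (simp add: DERIV_def)
  qed
qed

definition Bs :: "real \<Rightarrow> real" where "Bs u = qf u - 2 * qf (u - 1/2) + qf (u - 1)"
definition Bd :: "real \<Rightarrow> real" where "Bd u = 2 * max 0 u - 4 * max 0 (u - 1/2) + 2 * max 0 (u - 1)"

lemma qf_shift: "((\<lambda>u. qf (u - c)) has_real_derivative 2 * max 0 (u - c)) (at u)"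
proof -
  have "((\<lambda>u. u - c) has_real_derivative 1) (at u)" by (auto intro!: derivative_eq_intros)
  from DERIV_chain2[OF qf_deriv this] show ?thesis by simp
qed

lemma Bs_deriv: "(Bs has_real_derivative Bd u) (at u)"
proof -
  have "((\<lambda>u. qf (u - 0) - 2 * qf (u - 1/2) + qf (u - 1)) has_real_derivative
      2 * max 0 (u - 0) - 2 * (2 * max 0 (u - 1/2)) + 2 * max 0 (u - 1)) (at u)"
    by (intro DERIV_add DERIV_diff DERIV_cmult qf_shift)
  thus ?thesis unfolding Bs_def[abs_def] Bd_def by simp
qed

lemma Bs_cases:
  "u \<le> 0 \<Longrightarrow> Bs u = 0"
  "0 \<le> u \<Longrightarrow> u \<le> 1/2 \<Longrightarrow> Bs u = u\<^sup>2"
  "1/2 \<le> u \<Longrightarrow> u \<le> 1 \<Longrightarrow> Bs u = 1/2 - (1 - u)\<^sup>2"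
  "1 \<le> u \<Longrightarrow> Bs u = 1/2"
  unfolding Bs_def qf_def by (auto simp: max_def power2_eq_square algebra_simps)

lemma Bs_bounds: "0 \<le> Bs u" "Bs u \<le> 1/2"
proof -
  have "0 \<le> Bs u \<and> Bs u \<le> 1/2"
  proof (cases "u \<le> 0")
    case True thus ?thesis using Bs_cases(1) by simp
  next
    case u0: False
    show ?thesis
    proof (cases "u \<le> 1/2")
      case True
      have "u\<^sup>2 \<le> (1/2)\<^sup>2" using u0 True by (intro power_mono) auto
      hence "u\<^sup>2 \<le> 1/4" by (simp add: power2_eq_square)
      moreover have "0 \<le> u\<^sup>2" by simp
      ultimately show ?thesis using Bs_cases(2)[of u] u0 True by linarith
    next
      case u1: False
      show ?thesis
      proof (cases "u \<le> 1")
        case True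
        have "(1-u)\<^sup>2 \<le> (1/2)\<^sup>2" using u1 True by (intro power_mono) auto
        hence "(1-u)\<^sup>2 \<le> 1/4" by (simp add: power2_eq_square)
        moreover have "0 \<le> (1-u)\<^sup>2" by simp
        ultimately show ?thesis using Bs_cases(3)[of u] u1 True by linarith
      next
        case False thus ?thesis using Bs_cases(4)[of u] by simp
      qed
    qed
  qed
  thus "0 \<le> Bs u" "Bs u \<le> 1/2" by auto
qed

lemma Bd_nonneg: "Bd u \<ge> 0"
  unfolding Bd_def by (auto simp: max_def)

lemma Bd_zero: "u \<le> 0 \<Longrightarrow> Bd u = 0"
  unfolding Bd_def by (auto simp: max_def)

lemma Bd_cont: "continuous_on UNIV Bd"
  unfolding Bd_def[abs_def] by (intro continuous_on_add continuous_on_diff continuous_on_mult continuous_on_const continuous_on_max continuous_on_id)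

definition Hc :: "real \<Rightarrow> real" where "Hc t = 1 - 2 * Bs (t + 2)"
definition Hd :: "real \<Rightarrow> real" where "Hd t = - 2 * Bd (t + 2)"

lemma Hc_deriv: "(Hc has_real_derivative Hd t) (at t)"
proof -
  have "((\<lambda>t. t + 2) has_real_derivative 1) (at t)" by (auto intro!: derivative_eq_intros)
  from DERIV_chain2[OF Bs_deriv this]
  have "((\<lambda>t. Bs (t + 2)) has_real_derivative Bd (t + 2)) (at t)" by simp
  hence "((\<lambda>t. 1 - 2 * Bs (t + 2)) has_real_derivative 0 - 2 * Bd (t + 2)) (at t)"
    by (intro DERIV_diff DERIV_cmult DERIV_const)
  thus ?thesis unfolding Hc_def[abs_def] Hd_def by simp
qed

lemma Hd_cont: "continuous_on UNIV Hd"
proof -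
  have "continuous_on UNIV (\<lambda>t. Bd (t + 2))"
    by (rule continuous_on_compose2[OF Bd_cont]) (auto intro!: continuous_on_add continuous_on_id continuous_on_const)
  thus ?thesis unfolding Hd_def[abs_def] by (intro continuous_on_mult continuous_on_const)
qed

lemma Hc_one: "t \<le> -2 \<Longrightarrow> Hc t = 1"
  unfolding Hc_def using Bs_cases(1)[of "t+2"] by simp

lemma Hc_zero: "t \<ge> -1 \<Longrightarrow> Hc t = 0"
  unfolding Hc_def using Bs_cases(4)[of "t+2"] by simp

lemma Hc_bounds: "0 \<le> Hc t" "Hc t \<le> 1"
  unfolding Hc_def using Bs_bounds[of "t+2"] by auto

lemma Hd_nonpos: "Hd t \<le> 0"
  unfolding Hd_def using Bd_nonneg[of "t+2"] by simp

lemma Hd_supp: "Hd t \<noteq> 0 \<Longrightarrow> t > -2"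
  unfolding Hd_def using Bd_zero[of "t+2"] by force



lemma grad_eq: "(f has_derivative Df) (at x) \<Longrightarrow> grad f x = (\<Sum>i\<in>Basis. Df i *\<^sub>R i)"
  unfolding grad_def using frechet_derivative_at by metis

lemma grad_inner:
  fixes f :: "'a::euclidean_space \<Rightarrow> real"
  assumes "(f has_derivative Df) (at x)"
  shows "grad f x \<bullet> h = Df h"
proof -
  have lin: "linear Df" using assms has_derivative_linear by blast
  have "Df h = Df (\<Sum>i\<in>Basis. (h \<bullet> i) *\<^sub>R i)" by (simp add: euclidean_representation)
  also have "\<dots> = (\<Sum>i\<in>Basis. (h \<bullet> i) * Df i)" by (simp add: linear_sum[OF lin] linear_scale[OF lin])
  also have "\<dots> = grad f x \<bullet> h" unfolding grad_eq[OF assms] inner_sum_left inner_scaleR_left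
    by (simp add: inner_commute mult.commute)
  finally show ?thesis by simp
qed

lemma div_eq: "(F has_derivative DF) (at x) \<Longrightarrow> div_field F x = (\<Sum>i\<in>Basis. DF i \<bullet> i)"
  unfolding div_field_def using frechet_derivative_at by metis

lemma div_scale:
  fixes F :: "'a::euclidean_space \<Rightarrow> 'a"
  assumes "(\<phi> has_derivative D\<phi>) (at x)" "(F has_derivative DF) (at x)"
  shows "div_field (\<lambda>y. \<phi> y *\<^sub>R F y) x = \<phi> x * div_field F x + D\<phi> (F x)"
proof -
  have lin: "linear D\<phi>" using assms(1) has_derivative_linear by blast
  have "div_field (\<lambda>y. \<phi> y *\<^sub>R F y) x = (\<Sum>i\<in>Basis. (\<phi> x *\<^sub>R DF i + D\<phi> i *\<^sub>R F x) \<bullet> i)"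
    by (rule div_eq[OF has_derivative_scaleR[OF assms]])
  also have "\<dots> = \<phi> x * (\<Sum>i\<in>Basis. DF i \<bullet> i) + (\<Sum>i\<in>Basis. (F x \<bullet> i) * D\<phi> i)"
    by (simp add: inner_add_left sum.distrib sum_distrib_left mult.commute)
  also have "(\<Sum>i\<in>Basis. (F x \<bullet> i) * D\<phi> i) = D\<phi> (\<Sum>i\<in>Basis. (F x \<bullet> i) *\<^sub>R i)"
    by (simp add: linear_sum[OF lin] linear_scale[OF lin])
  also have "\<dots> = D\<phi> (F x)" by (simp add: euclidean_representation)
  finally show ?thesis using div_eq[OF assms(2)] by simp
qed

lemma div_diff:
  fixes F G :: "'a::euclidean_space \<Rightarrow> 'a"
  assumes "(F has_derivative DF) (at x)" "(G has_derivative DG) (at x)"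
  shows "div_field (\<lambda>y. F y - G y) x = div_field F x - div_field G x"
  using div_eq[OF has_derivative_diff[OF assms]] div_eq[OF assms(1)] div_eq[OF assms(2)]
  by (simp add: inner_diff_left sum_subtractf)

definition C2d :: "'a::real_normed_vector set \<Rightarrow> ('a \<Rightarrow> real) \<Rightarrow> ('a \<Rightarrow> 'a \<Rightarrow> real) \<Rightarrow> bool" where
  "C2d U f Df \<longleftrightarrow> C1d U f Df \<and> (\<forall>h. \<exists>D. C1d U (\<lambda>x. Df x h) D)"

lemma grad_C1d:
  fixes f :: "'a::euclidean_space \<Rightarrow> real"
  assumes "open U" "C2d U f Df"
  shows "\<exists>DG. C1d U (grad f) DG"
proof -
  define DD where "DD i = (SOME D. C1d U (\<lambda>x. Df x i) D)" for i
  have DD: "C1d U (\<lambda>x. Df x i) (DD i)" for i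
    using assms(2) unfolding C2d_def DD_def by (metis someI)
  have "C1d U (\<lambda>x. \<Sum>i\<in>Basis. Df x i *\<^sub>R i) (\<lambda>x h. \<Sum>i\<in>Basis. Df x i *\<^sub>R 0 + DD i x h *\<^sub>R i)"
    by (intro C1d_sum C1d_scaleR DD C1d_const finite_Basis)
  hence "C1d U (grad f) (\<lambda>x h. \<Sum>i\<in>Basis. Df x i *\<^sub>R 0 + DD i x h *\<^sub>R i)"
  proof (rule C1d_cong[OF _ assms(1)])
    fix x assume "x \<in> U"
    thus "(\<Sum>i\<in>Basis. Df x i *\<^sub>R i) = grad f x"
      using grad_eq C1d_der assms(2) unfolding C2d_def by metis
  qed
  thus ?thesis by blast
qed

lemma div_cont:
  fixes F :: "'a::euclidean_space \<Rightarrow> 'a"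
  assumes "C1d U F DF"
  shows "continuous_on U (div_field F)"
proof -
  have "continuous_on U (\<lambda>x. \<Sum>i\<in>Basis. DF x i \<bullet> i)"
    by (intro continuous_on_sum continuous_on_inner C1d_dcont[OF assms] continuous_on_const)
  moreover have "\<And>x. x \<in> U \<Longrightarrow> (\<Sum>i\<in>Basis. DF x i \<bullet> i) = div_field F x"
    using div_eq C1d_der[OF assms] by metis
  ultimately show ?thesis using continuous_on_cong by force
qed

lemma grad_cont:
  fixes f :: "'a::euclidean_space \<Rightarrow> real"
  assumes "C1d U f Df"
  shows "continuous_on U (grad f)"
proof -
  have "continuous_on U (\<lambda>x. \<Sum>i\<in>Basis. Df x i *\<^sub>R i)"
    by (intro continuous_on_sum continuous_on_scaleR C1d_dcont[OF assms] continuous_on_const)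
  moreover have "\<And>x. x \<in> U \<Longrightarrow> (\<Sum>i\<in>Basis. Df x i *\<^sub>R i) = grad f x"
    using grad_eq C1d_der[OF assms] by metis
  ultimately show ?thesis using continuous_on_cong by force
qed

lemma ibp_open:
  fixes g :: "'a::euclidean_space \<Rightarrow> real"
  assumes U: "open U" and K: "compact K" "K \<subseteq> S" "S \<subseteq> U"
    and g: "C1d U g Dg" and supp: "\<And>y. y \<notin> K \<Longrightarrow> g y = 0"
  shows "((\<lambda>y. Dg y h) has_integral 0) S"
proof -
  define g' where "g' y = (if y \<in> U then Dg y else (\<lambda>h. 0))" for y
  have clK: "open (-K)" using K(1) compact_imp_closed by blast
  have zero: "(g has_derivative (\<lambda>h. 0)) (at y)" if "y \<notin> K" for y
  proof (rule has_derivative_transform_within_open[where f="\<lambda>x. 0" and s="-K"])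
    show "((\<lambda>x. 0) has_derivative (\<lambda>h. 0)) (at y)" by simp
    show "open (-K)" by (rule clK)
    show "y \<in> -K" using that by simp
    show "\<And>z. z \<in> -K \<Longrightarrow> 0 = g z" using supp by simp
  qed
  have der: "(g has_derivative g' y) (at y)" for y
  proof (cases "y \<in> U")
    case True thus ?thesis unfolding g'_def using C1d_der[OF g] by simp
  next
    case False
    hence "y \<notin> K" using K by blast
    thus ?thesis unfolding g'_def using zero False by simp
  qed
  have g'z: "g' y = (\<lambda>h. 0)" if "y \<notin> K" for y
    using has_derivative_unique[OF der zero[OF that]] .
  have cont: "continuous_on UNIV (\<lambda>y. g' y h)"
  proof -
    have c1: "continuous_on U (\<lambda>y. g' y h)"
      using C1d_dcont[OF g, of h] by (rule continuous_on_cong[THEN iffD1, rotated 2]) (auto simp: g'_def)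
    have c2: "continuous_on (-K) (\<lambda>y. g' y h)"
      by (rule continuous_on_cong[THEN iffD1, rotated 2, OF continuous_on_const[of _ 0]]) (auto simp: g'z)
    have "U \<union> -K = UNIV" using K by blast
    thus ?thesis using continuous_on_open_Un[OF U clK c1 c2] by simp
  qed
  have I: "((\<lambda>y. g' y h) has_integral 0) UNIV"
    by (rule ibp_zero[OF der cont K(1) supp])
  have "((\<lambda>y. if y \<in> S then g' y h else 0) has_integral 0) UNIV"
    using I
  proof (rule has_integral_cong[THEN iffD1, rotated])
    fix x show "g' x h = (if x \<in> S then g' x h else 0)"
    proof (cases "x \<in> S")
      case False
      hence "x \<notin> K" using K by blast
      thus ?thesis using g'z False by simp
    qed simp
  qed
  hence "((\<lambda>y. g' y h) has_integral 0) S" using has_integral_restrict_UNIV by blast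
  thus ?thesis
    by (rule has_integral_cong[THEN iffD1, rotated]) (use K in \<open>auto simp: g'_def\<close>)
qed



lemma chi_C1d:
  assumes "C1d UNIV \<rho> D\<rho>" "\<epsilon> > 0"
  shows "C1d UNIV (\<lambda>x. Hc (\<rho> x / \<epsilon>)) (\<lambda>x h. Hd (\<rho> x / \<epsilon>) / \<epsilon> * D\<rho> x h)"
proof -
  have d: "((\<lambda>t. Hc (t / \<epsilon>)) has_real_derivative Hd (t / \<epsilon>) / \<epsilon>) (at t)" for t
  proof -
    have "((\<lambda>t. t / \<epsilon>) has_real_derivative 1 / \<epsilon>) (at t)" using assms(2) by (auto intro!: derivative_eq_intros)
    from DERIV_chain2[OF Hc_deriv this] show ?thesis by simp
  qed
  have c: "continuous_on UNIV (\<lambda>t. Hd (t / \<epsilon>) / \<epsilon>)"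
    by (intro continuous_on_divide continuous_on_compose2[OF Hd_cont] continuous_on_const continuous_on_id)
      (use assms in auto)
  show ?thesis using C1d_comp_real[OF assms(1) _ open_UNIV d c] by simp
qed

lemma cut_ibp:
  fixes F :: "'a::euclidean_space \<Rightarrow> 'a"
  assumes \<Omega>: "open \<Omega>" "bounded \<Omega>" and U: "open U" "closure \<Omega> \<subseteq> U"
    and \<rho>\<Omega>: "\<Omega> = {x. \<rho> x < 0}" and \<rho>1: "C1d UNIV \<rho> D\<rho>"
    and F: "C1d U F DF" and \<epsilon>: "\<epsilon> > 0"
  shows "((\<lambda>x. Hc (\<rho> x / \<epsilon>) * div_field F x + Hd (\<rho> x / \<epsilon>) / \<epsilon> * (grad \<rho> x \<bullet> F x)) has_integral 0) \<Omega>"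
proof -
  define chi where "chi x = Hc (\<rho> x / \<epsilon>)" for x
  define Dchi where "Dchi x h = Hd (\<rho> x / \<epsilon>) / \<epsilon> * D\<rho> x h" for x h
  have chi: "C1d UNIV chi Dchi" unfolding chi_def[abs_def] Dchi_def[abs_def] by (rule chi_C1d[OF \<rho>1 \<epsilon>])
  define Y where "Y y = chi y *\<^sub>R F y" for y
  define DY where "DY x h = chi x *\<^sub>R DF x h + Dchi x h *\<^sub>R F x" for x h
  have Y: "C1d U Y DY" unfolding Y_def[abs_def] DY_def[abs_def]
    by (rule C1d_scaleR[OF C1d_subset[OF chi] F]) simp
  define K where "K = {y. \<rho> y \<le> -\<epsilon>}"
  have \<rho>c: "continuous_on UNIV \<rho>" using C1d_cont[OF \<rho>1] .
  have KO: "K \<subseteq> \<Omega>" unfolding K_def \<rho>\<Omega> using \<epsilon> by auto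
  have OU: "\<Omega> \<subseteq> U" using U(2) closure_subset by blast
  have "closed K" unfolding K_def
    using continuous_closed_preimage[OF \<rho>c closed_UNIV closed_atMost[of "-\<epsilon>"]] by (simp add: vimage_def)
  moreover have "bounded K" using bounded_subset[OF \<Omega>(2) KO] .
  ultimately have Kc: "compact K" using compact_eq_bounded_closed by blast
  have supp: "Y y \<bullet> i = 0" if "y \<notin> K" for y i
  proof -
    have "\<rho> y > -\<epsilon>" using that unfolding K_def by simp
    hence "\<rho> y / \<epsilon> \<ge> -1" using \<epsilon> by (simp add: field_simps)
    hence "chi y = 0" unfolding chi_def using Hc_zero by simp
    thus ?thesis unfolding Y_def by simp
  qed
  have each: "((\<lambda>y. DY y i \<bullet> i) has_integral 0) \<Omega>" for i
    by (rule ibp_open[OF U(1) Kc KO OU C1d_inner[OF Y] supp])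
  have "((\<lambda>y. \<Sum>i\<in>Basis. DY y i \<bullet> i) has_integral (\<Sum>i\<in>Basis. 0)) \<Omega>"
    using has_integral_sum[of Basis "\<lambda>i y. DY y i \<bullet> i" "\<lambda>i. 0" \<Omega>] each by simp
  hence S: "((\<lambda>y. \<Sum>i\<in>Basis. DY y i \<bullet> i) has_integral 0) \<Omega>" by simp
  show ?thesis
  proof (rule has_integral_cong[THEN iffD1, OF _ S])
    fix x assume x: "x \<in> \<Omega>"
    hence xU: "x \<in> U" using OU by blast
    have dY: "(Y has_derivative DY x) (at x)" using C1d_der[OF Y xU] .
    have dchi: "(chi has_derivative Dchi x) (at x)" using C1d_der[OF chi] by simp
    have dF: "(F has_derivative DF x) (at x)" using C1d_der[OF F xU] .
    have d\<rho>: "(\<rho> has_derivative D\<rho> x) (at x)" using C1d_der[OF \<rho>1] by simp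
    have "(\<Sum>i\<in>Basis. DY x i \<bullet> i) = div_field Y x" using div_eq[OF dY] by simp
    also have "\<dots> = chi x * div_field F x + Dchi x (F x)"
      unfolding Y_def by (rule div_scale[OF dchi dF])
    also have "Dchi x (F x) = Hd (\<rho> x / \<epsilon>) / \<epsilon> * (grad \<rho> x \<bullet> F x)"
      unfolding Dchi_def using grad_inner[OF d\<rho>] by simp
    finally show "(\<Sum>i\<in>Basis. DY x i \<bullet> i) = Hc (\<rho> x / \<epsilon>) * div_field F x + Hd (\<rho> x / \<epsilon>) / \<epsilon> * (grad \<rho> x \<bullet> F x)"
      unfolding chi_def by simp
  qed
qed



lemma eps0_exists:
  fixes \<Omega> :: "'a::euclidean_space set" and k \<rho> :: "'a \<Rightarrow> real"
  assumes \<Omega>: "open \<Omega>" "bounded \<Omega>" and \<rho>\<Omega>: "\<Omega> = {x. \<rho> x < 0}"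
    and kc: "continuous_on (closure \<Omega>) k" and \<rho>c: "continuous_on (closure \<Omega>) \<rho>"
    and kb: "\<And>x. x \<in> frontier \<Omega> \<Longrightarrow> k x < 0"
  shows "\<exists>\<epsilon>0>0. \<forall>x\<in>\<Omega>. \<rho> x \<ge> -2 * \<epsilon>0 \<longrightarrow> k x < 0"
proof -
  define Kd where "Kd = closure \<Omega> \<inter> k -` {0..}"
  have cl: "compact (closure \<Omega>)" using \<Omega>(2) compact_closure by blast
  have "closed Kd" unfolding Kd_def by (rule continuous_closed_preimage[OF kc closed_closure closed_atLeast])
  hence Kc: "compact Kd" using compact_Int_closed[OF cl, of Kd] unfolding Kd_def by (simp add: Int_absorb1 inf.assoc)
  have KO: "Kd \<subseteq> \<Omega>"
  proof
    fix x assume x: "x \<in> Kd"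
    show "x \<in> \<Omega>"
    proof (rule ccontr)
      assume "x \<notin> \<Omega>"
      hence "x \<in> frontier \<Omega>" using x unfolding Kd_def frontier_def interior_open[OF \<Omega>(1)] by blast
      hence "k x < 0" by (rule kb)
      thus False using x unfolding Kd_def by simp
    qed
  qed
  show ?thesis
  proof (cases "Kd = {}")
    case True
    show ?thesis
    proof (intro exI[of _ 1] conjI ballI impI)
      fix x assume "x \<in> \<Omega>"
      hence "x \<in> closure \<Omega>" using closure_subset by blast
      hence "x \<notin> k -` {0..}" using True unfolding Kd_def by blast
      thus "k x < 0" by simp
    qed simp
  next
    case False
    have "continuous_on Kd \<rho>" using continuous_on_subset[OF \<rho>c] unfolding Kd_def by blast
    then obtain xm where xm: "xm \<in> Kd" "\<And>y. y \<in> Kd \<Longrightarrow> \<rho> y \<le> \<rho> xm"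
      using continuous_attains_sup[OF Kc False] by blast
    have m: "\<rho> xm < 0" using KO xm(1) \<rho>\<Omega> by blast
    show ?thesis
    proof (intro exI[of _ "- \<rho> xm / 4"] conjI ballI impI)
      show "0 < - \<rho> xm / 4" using m by simp
      fix x assume x: "x \<in> \<Omega>" "- 2 * (- \<rho> xm / 4) \<le> \<rho> x"
      show "k x < 0"
      proof (rule ccontr)
        assume "\<not> k x < 0"
        hence "x \<in> Kd" using x(1) closure_subset unfolding Kd_def by auto
        hence "\<rho> x \<le> \<rho> xm" by (rule xm(2))
        thus False using x(2) m by simp
      qed
    qed
  qed
qed

lemma div_nonpos:
  fixes X :: "'a::euclidean_space \<Rightarrow> 'a"
  assumes \<Omega>: "open \<Omega>" "bounded \<Omega>" and U: "open U" "closure \<Omega> \<subseteq> U"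
    and \<rho>\<Omega>: "\<Omega> = {x. \<rho> x < 0}" and \<rho>b: "\<forall>x\<in>frontier \<Omega>. grad \<rho> x \<noteq> 0"
    and \<rho>1: "C1d UNIV \<rho> D\<rho>" and \<rho>2: "C1d UNIV (grad \<rho>) DN"
    and X: "C1d U X DX" and bd: "\<forall>x\<in>frontier \<Omega>. X x \<bullet> grad \<rho> x \<le> 0"
  shows "integral \<Omega> (div_field X) \<le> 0"
proof -
  define N where "N = grad \<rho>"
  have cl: "compact (closure \<Omega>)" using \<Omega>(2) compact_closure by blast
  have \<Omega>m: "\<Omega> \<in> sets lebesgue" using \<Omega>(1) by simp
  have intg: "f integrable_on \<Omega>" if "continuous_on (closure \<Omega>) f" for f :: "'a \<Rightarrow> real"
    by (rule cont_integrable_sub[OF cl that closure_subset \<Omega>m])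
  have OU: "\<Omega> \<subseteq> U" using U(2) closure_subset by blast
  have cX: "continuous_on (closure \<Omega>) X" using continuous_on_subset[OF C1d_cont[OF X] U(2)] .
  have cdX: "continuous_on (closure \<Omega>) (div_field X)" using continuous_on_subset[OF div_cont[OF X] U(2)] .
  have cN: "continuous_on (closure \<Omega>) N" unfolding N_def using continuous_on_subset[OF C1d_cont[OF \<rho>2]] by blast
  have cdN: "continuous_on (closure \<Omega>) (div_field N)" unfolding N_def using continuous_on_subset[OF div_cont[OF \<rho>2]] by blast
  have c\<rho>: "continuous_on (closure \<Omega>) \<rho>" using continuous_on_subset[OF C1d_cont[OF \<rho>1]] by blast
  have cHd: "continuous_on (closure \<Omega>) (\<lambda>x. Hd (\<rho> x / \<epsilon>))" if "\<epsilon> \<noteq> 0" for \<epsilon>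
    by (rule continuous_on_compose2[OF Hd_cont]) (use that in \<open>auto intro!: continuous_on_divide c\<rho> continuous_on_const\<close>)
  have cHc: "continuous_on (closure \<Omega>) (\<lambda>x. Hc (\<rho> x / \<epsilon>))" if "\<epsilon> \<noteq> 0" for \<epsilon>
  proof -
    have "continuous_on UNIV Hc" using Hc_deriv DERIV_isCont continuous_at_imp_continuous_on by blast
    thus ?thesis
      by (rule continuous_on_compose2) (use that in \<open>auto intro!: continuous_on_divide c\<rho> continuous_on_const\<close>)
  qed
  define M where "M = integral \<Omega> (\<lambda>x. \<bar>div_field N x\<bar>)"
  have cut: "integral \<Omega> (\<lambda>x. Hc (\<rho> x / \<epsilon>) * div_field F x) = integral \<Omega> (\<lambda>x. - (Hd (\<rho> x / \<epsilon>) / \<epsilon> * (N x \<bullet> F x)))"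
    if F: "C1d U F DF" and \<epsilon>: "\<epsilon> > 0" for F DF \<epsilon>
  proof -
    have h: "((\<lambda>x. Hc (\<rho> x / \<epsilon>) * div_field F x + Hd (\<rho> x / \<epsilon>) / \<epsilon> * (grad \<rho> x \<bullet> F x)) has_integral 0) \<Omega>"
      by (rule cut_ibp[OF \<Omega> U \<rho>\<Omega> \<rho>1 F \<epsilon>])
    have cF: "continuous_on (closure \<Omega>) F" using continuous_on_subset[OF C1d_cont[OF F] U(2)] .
    have "(\<lambda>x. Hd (\<rho> x / \<epsilon>) / \<epsilon> * (N x \<bullet> F x)) integrable_on \<Omega>"
      by (intro intg continuous_on_mult continuous_on_divide continuous_on_inner cHd cN cF continuous_on_const) (use \<epsilon> in auto)
    then obtain J where J: "((\<lambda>x. Hd (\<rho> x / \<epsilon>) / \<epsilon> * (N x \<bullet> F x)) has_integral J) \<Omega>"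
      by blast
    have "((\<lambda>x. (Hc (\<rho> x / \<epsilon>) * div_field F x + Hd (\<rho> x / \<epsilon>) / \<epsilon> * (grad \<rho> x \<bullet> F x))
            - Hd (\<rho> x / \<epsilon>) / \<epsilon> * (N x \<bullet> F x)) has_integral 0 - J) \<Omega>"
      by (rule has_integral_diff[OF h J])
    hence "((\<lambda>x. Hc (\<rho> x / \<epsilon>) * div_field F x) has_integral - J) \<Omega>" unfolding N_def by simp
    moreover have "((\<lambda>x. - (Hd (\<rho> x / \<epsilon>) / \<epsilon> * (N x \<bullet> F x))) has_integral - J) \<Omega>"
      using has_integral_neg[OF J] .
    ultimately show ?thesis using integral_unique by metis
  qed
  have main: "integral \<Omega> (div_field X) \<le> \<delta> * M" if \<delta>: "\<delta> > 0" for \<delta>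
  proof -
    define k where "k x = X x \<bullet> N x - \<delta> * (N x \<bullet> N x)" for x
    have kc: "continuous_on (closure \<Omega>) k" unfolding k_def[abs_def]
      by (intro continuous_on_diff continuous_on_mult continuous_on_inner cX cN continuous_on_const)
    have kb: "k x < 0" if "x \<in> frontier \<Omega>" for x
    proof -
      have "N x \<noteq> 0" using \<rho>b that unfolding N_def by blast
      hence "N x \<bullet> N x > 0" by simp
      moreover have "X x \<bullet> N x \<le> 0" using bd that unfolding N_def by blast
      moreover have "\<delta> * (N x \<bullet> N x) > 0" using \<open>N x \<bullet> N x > 0\<close> \<delta> by (rule mult_pos_pos[rotated])
      ultimately show ?thesis unfolding k_def by linarith
    qed
    obtain \<epsilon>0 where \<epsilon>0: "\<epsilon>0 > 0" "\<And>x. x \<in> \<Omega> \<Longrightarrow> \<rho> x \<ge> -2 * \<epsilon>0 \<Longrightarrow> k x < 0"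
      using eps0_exists[OF \<Omega> \<rho>\<Omega> kc c\<rho> kb] by blast
    have bnd: "integral \<Omega> (\<lambda>x. Hc (\<rho> x / \<epsilon>) * div_field X x) \<le> \<delta> * M" if \<epsilon>: "0 < \<epsilon>" "\<epsilon> \<le> \<epsilon>0" for \<epsilon>
    proof -
      have "integral \<Omega> (\<lambda>x. Hc (\<rho> x / \<epsilon>) * div_field X x) = integral \<Omega> (\<lambda>x. - (Hd (\<rho> x / \<epsilon>) / \<epsilon> * (N x \<bullet> X x)))"
        by (rule cut[OF X \<epsilon>(1)])
      also have "\<dots> \<le> integral \<Omega> (\<lambda>x. \<delta> * (- (Hd (\<rho> x / \<epsilon>) / \<epsilon> * (N x \<bullet> N x))))"
      proof (rule integral_le)
        show "(\<lambda>x. - (Hd (\<rho> x / \<epsilon>) / \<epsilon> * (N x \<bullet> X x))) integrable_on \<Omega>"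
          by (intro intg continuous_on_minus continuous_on_mult continuous_on_divide continuous_on_inner cHd cN cX continuous_on_const) (use \<epsilon> in auto)
        show "(\<lambda>x. \<delta> * (- (Hd (\<rho> x / \<epsilon>) / \<epsilon> * (N x \<bullet> N x)))) integrable_on \<Omega>"
          by (intro intg continuous_on_minus continuous_on_mult continuous_on_divide continuous_on_inner cHd cN continuous_on_const) (use \<epsilon> in auto)
        fix x assume x: "x \<in> \<Omega>"
        define c where "c = - Hd (\<rho> x / \<epsilon>) / \<epsilon>"
        have c0: "c \<ge> 0" unfolding c_def using Hd_nonpos[of "\<rho> x / \<epsilon>"] \<epsilon> by (simp add: divide_nonpos_pos)
        have "c * (N x \<bullet> X x) \<le> c * (\<delta> * (N x \<bullet> N x))"
        proof (cases "Hd (\<rho> x / \<epsilon>) = 0")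
          case True thus ?thesis unfolding c_def by simp
        next
          case False
          hence "\<rho> x / \<epsilon> > -2" by (rule Hd_supp)
          hence "\<rho> x > -2 * \<epsilon>" using \<epsilon> by (simp add: field_simps)
          hence "\<rho> x \<ge> -2 * \<epsilon>0" using \<epsilon> by linarith
          hence "k x < 0" using \<epsilon>0(2)[OF x] by blast
          hence "N x \<bullet> X x \<le> \<delta> * (N x \<bullet> N x)" unfolding k_def by (simp add: inner_commute)
          thus ?thesis using c0 by (rule mult_left_mono)
        qed
        thus "- (Hd (\<rho> x / \<epsilon>) / \<epsilon> * (N x \<bullet> X x)) \<le> \<delta> * (- (Hd (\<rho> x / \<epsilon>) / \<epsilon> * (N x \<bullet> N x)))"
          unfolding c_def by (simp add: algebra_simps)
      qed
      also have "\<dots> = \<delta> * integral \<Omega> (\<lambda>x. - (Hd (\<rho> x / \<epsilon>) / \<epsilon> * (N x \<bullet> N x)))"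
        by (rule integral_mult_right)
      also have "integral \<Omega> (\<lambda>x. - (Hd (\<rho> x / \<epsilon>) / \<epsilon> * (N x \<bullet> N x))) = integral \<Omega> (\<lambda>x. Hc (\<rho> x / \<epsilon>) * div_field N x)"
        using cut[OF \<rho>2[THEN C1d_subset, OF subset_UNIV, folded N_def] \<epsilon>(1)] by simp
      also have "\<dots> \<le> M" unfolding M_def
      proof (rule integral_le)
        show "(\<lambda>x. Hc (\<rho> x / \<epsilon>) * div_field N x) integrable_on \<Omega>"
          by (intro intg continuous_on_mult cHc cdN) (use \<epsilon> in simp)
        show "(\<lambda>x. \<bar>div_field N x\<bar>) integrable_on \<Omega>"
          by (intro intg continuous_on_rabs cdN)
        fix x
        have "Hc (\<rho> x / \<epsilon>) * div_field N x \<le> \<bar>Hc (\<rho> x / \<epsilon>) * div_field N x\<bar>" by simp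
        also have "\<dots> = Hc (\<rho> x / \<epsilon>) * \<bar>div_field N x\<bar>" using Hc_bounds(1) by (simp add: abs_mult)
        also have "\<dots> \<le> 1 * \<bar>div_field N x\<bar>" using Hc_bounds(2) by (intro mult_right_mono) auto
        finally show "Hc (\<rho> x / \<epsilon>) * div_field N x \<le> \<bar>div_field N x\<bar>" by simp
      qed
      finally show ?thesis using \<delta> by (simp add: mult_left_mono)
    qed
    define f where "f n x = Hc (\<rho> x / (1 / (real n + 1))) * div_field X x" for n x
    have lim: "(\<lambda>n. integral \<Omega> (f n)) \<longlonglongrightarrow> integral \<Omega> (div_field X)"
    proof (rule dominated_convergence(2))
      show "f n integrable_on \<Omega>" for n unfolding f_def by (intro intg continuous_on_mult cHc cdX) simp
      show "(\<lambda>x. \<bar>div_field X x\<bar>) integrable_on \<Omega>" by (intro intg continuous_on_rabs cdX)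
      fix n x assume "x \<in> \<Omega>"
      have "\<bar>f n x\<bar> = Hc (\<rho> x / (1 / (real n + 1))) * \<bar>div_field X x\<bar>"
        unfolding f_def using Hc_bounds(1) by (simp add: abs_mult)
      also have "\<dots> \<le> 1 * \<bar>div_field X x\<bar>" using Hc_bounds(2) by (intro mult_right_mono) auto
      finally show "norm (f n x) \<le> \<bar>div_field X x\<bar>" by simp
    next
      fix x assume x: "x \<in> \<Omega>"
      hence neg: "\<rho> x < 0" using \<rho>\<Omega> by blast
      obtain n0 :: nat where n0: "- 2 / \<rho> x \<le> real n0" using real_arch_simple by blast
      have "\<forall>\<^sub>F n in sequentially. f n x = div_field X x"
        unfolding eventually_sequentially
      proof (intro exI[of _ n0] allI impI)
        fix n assume "n0 \<le> n"
        hence "- 2 / \<rho> x \<le> real n + 1" using n0 by linarith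
        hence "\<rho> x * (real n + 1) \<le> \<rho> x * (- 2 / \<rho> x)" using neg by (intro mult_left_mono_neg) auto
        hence "- 2 \<ge> \<rho> x * (real n + 1)" using neg by simp
        hence "\<rho> x / (1 / (real n + 1)) \<le> -2" by simp
        thus "f n x = div_field X x" unfolding f_def using Hc_one by simp
      qed
      thus "(\<lambda>n. f n x) \<longlonglongrightarrow> div_field X x" by (rule tendsto_eventually)
    qed
    obtain n1 :: nat where n1: "inverse (real (Suc n1)) < \<epsilon>0" using reals_Archimedean[OF \<epsilon>0(1)] by blast
    have "\<forall>n\<ge>n1. integral \<Omega> (f n) \<le> \<delta> * M"
    proof (intro allI impI)
      fix n assume "n1 \<le> n"
      hence "1 / (real n + 1) \<le> inverse (real (Suc n1))" by (simp add: field_simps)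
      hence "1 / (real n + 1) \<le> \<epsilon>0" using n1 by linarith
      moreover have "0 < 1 / (real n + 1)" by simp
      ultimately show "integral \<Omega> (f n) \<le> \<delta> * M" unfolding f_def by (rule bnd[rotated])
    qed
    thus ?thesis using LIMSEQ_le_const2[OF lim] by blast
  qed
  show ?thesis
  proof (rule ccontr)
    assume "\<not> integral \<Omega> (div_field X) \<le> 0"
    hence pos: "integral \<Omega> (div_field X) > 0" by simp
    have M0: "M \<ge> 0" unfolding M_def by (rule integral_nonneg) (auto intro!: intg continuous_on_rabs cdN)
    define \<delta> where "\<delta> = integral \<Omega> (div_field X) / (2 * (M + 1))"
    have "\<delta> > 0" unfolding \<delta>_def using pos M0 by simp
    hence "integral \<Omega> (div_field X) \<le> \<delta> * M" by (rule main)
    also have "\<delta> * M < integral \<Omega> (div_field X)"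
    proof -
      have "integral \<Omega> (div_field X) * M < integral \<Omega> (div_field X) * (2 * (M + 1))"
        using pos M0 by (intro mult_strict_left_mono) auto
      thus ?thesis unfolding \<delta>_def using M0 by (simp add: divide_less_eq)
    qed
    finally show False by simp
  qed
qed



lemma C1d_powr:
  fixes r :: "'a::real_normed_vector \<Rightarrow> real" and \<beta> :: real
  assumes r: "C1d U r Dr" and rpos: "\<And>x. x \<in> U \<Longrightarrow> r x > 0"
  shows "C1d U (\<lambda>x. r x powr \<beta>) (\<lambda>x h. \<beta> * r x powr (\<beta> - 1) * Dr x h)"
proof -
  have c: "continuous_on {0<..} (\<lambda>t::real. \<beta> * t powr (\<beta> - 1))"
    by (intro continuous_on_mult continuous_on_const continuous_on_powr continuous_on_id) auto
  have d: "((\<lambda>t. t powr \<beta>) has_real_derivative \<beta> * t powr (\<beta> - 1)) (at t)" if "t \<in> {0<..}" for t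
    using has_real_derivative_powr[of t \<beta>] that by simp
  show ?thesis using C1d_comp_real[OF r _ open_greaterThan d c] rpos by simp
qed

lemma core:
  fixes \<Omega> :: "'a::euclidean_space set" and v vs r a \<phi> \<psi> :: "'a \<Rightarrow> real"
  assumes \<Omega>: "open \<Omega>" "bounded \<Omega>" and U: "open U" "closure \<Omega> \<subseteq> U"
    and \<rho>\<Omega>: "\<Omega> = {x. \<rho> x < 0}" and \<rho>b: "\<forall>x\<in>frontier \<Omega>. grad \<rho> x \<noteq> 0"
    and \<rho>1: "C1d UNIV \<rho> D\<rho>" and \<rho>2: "C1d UNIV (grad \<rho>) DN"
    and v: "C2d U v Dv" and vs: "C2d U vs Dvs" and a: "C1d U a Da" and r: "C1d U r Dr"
    and rpos: "\<forall>x\<in>U. r x > 0" and vsr: "\<forall>x\<in>U. vs x = r x * v x"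
    and \<phi>: "\<forall>x\<in>U. \<phi> x = v x * r x * (1 - r x powr \<beta>)" and \<psi>: "\<forall>x\<in>U. \<psi> x = v x * (1 - r x powr \<beta>)"
    and bd: "\<forall>x\<in>frontier \<Omega>. a x * (\<phi> x * (grad v x \<bullet> grad \<rho> x) - \<psi> x * (grad vs x \<bullet> grad \<rho> x)) \<le> 0"
  shows "integral \<Omega> (\<lambda>x. \<phi> x * div_field (\<lambda>y. a y *\<^sub>R grad v y) x - \<psi> x * div_field (\<lambda>y. a y *\<^sub>R grad vs y) x)
      \<le> - integral \<Omega> (\<lambda>x. \<beta> * a x * (v x)\<^sup>2 * r x powr (\<beta> - 1) * (norm (grad r x))\<^sup>2)"
proof -
  have v1: "C1d U v Dv" using v unfolding C2d_def by blast
  have vs1: "C1d U vs Dvs" using vs unfolding C2d_def by blast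
  have rp: "C1d U (\<lambda>x. r x powr \<beta>) (\<lambda>x h. \<beta> * r x powr (\<beta> - 1) * Dr x h)"
    using C1d_powr[OF r] rpos by blast
  define D\<phi> where "D\<phi> x h = v x * r x * (0 - \<beta> * r x powr (\<beta> - 1) * Dr x h) + (v x * Dr x h + Dv x h * r x) * (1 - r x powr \<beta>)" for x h
  define D\<psi> where "D\<psi> x h = v x * (0 - \<beta> * r x powr (\<beta> - 1) * Dr x h) + Dv x h * (1 - r x powr \<beta>)" for x h
  have \<phi>C: "C1d U \<phi> D\<phi>"
  proof -
    have "C1d U (\<lambda>x. v x * r x * (1 - r x powr \<beta>)) D\<phi>"
      unfolding D\<phi>_def[abs_def] by (intro C1d_mult C1d_diff v1 r rp C1d_const)
    thus ?thesis by (rule C1d_cong[OF _ U(1)]) (use \<phi> in simp)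
  qed
  have \<psi>C: "C1d U \<psi> D\<psi>"
  proof -
    have "C1d U (\<lambda>x. v x * (1 - r x powr \<beta>)) D\<psi>"
      unfolding D\<psi>_def[abs_def] by (intro C1d_mult C1d_diff v1 r rp C1d_const)
    thus ?thesis by (rule C1d_cong[OF _ U(1)]) (use \<psi> in simp)
  qed
  obtain DGv where gv: "C1d U (grad v) DGv" using grad_C1d[OF U(1) v] by blast
  obtain DGvs where gvs: "C1d U (grad vs) DGvs" using grad_C1d[OF U(1) vs] by blast
  define Z1 where "Z1 y = a y *\<^sub>R grad v y" for y
  define Z2 where "Z2 y = a y *\<^sub>R grad vs y" for y
  define DZ1 where "DZ1 x h = a x *\<^sub>R DGv x h + Da x h *\<^sub>R grad v x" for x h
  define DZ2 where "DZ2 x h = a x *\<^sub>R DGvs x h + Da x h *\<^sub>R grad vs x" for x h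
  have Z1: "C1d U Z1 DZ1" unfolding Z1_def[abs_def] DZ1_def[abs_def] by (rule C1d_scaleR[OF a gv])
  have Z2: "C1d U Z2 DZ2" unfolding Z2_def[abs_def] DZ2_def[abs_def] by (rule C1d_scaleR[OF a gvs])
  define X where "X y = \<phi> y *\<^sub>R Z1 y - \<psi> y *\<^sub>R Z2 y" for y
  have XC: "C1d U X (\<lambda>x h. (\<phi> x *\<^sub>R DZ1 x h + D\<phi> x h *\<^sub>R Z1 x) - (\<psi> x *\<^sub>R DZ2 x h + D\<psi> x h *\<^sub>R Z2 x))"
    unfolding X_def[abs_def] by (intro C1d_diff C1d_scaleR \<phi>C \<psi>C Z1 Z2)
  have OU: "\<Omega> \<subseteq> U" using U(2) closure_subset by blast
  have FU: "frontier \<Omega> \<subseteq> U" using U(2) frontier_def by blast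
  have bdX: "\<forall>x\<in>frontier \<Omega>. X x \<bullet> grad \<rho> x \<le> 0"
  proof
    fix x assume "x \<in> frontier \<Omega>"
    hence "a x * (\<phi> x * (grad v x \<bullet> grad \<rho> x) - \<psi> x * (grad vs x \<bullet> grad \<rho> x)) \<le> 0" using bd by blast
    thus "X x \<bullet> grad \<rho> x \<le> 0" unfolding X_def Z1_def Z2_def by (simp add: inner_diff_left algebra_simps)
  qed
  have divX: "integral \<Omega> (div_field X) \<le> 0"
    by (rule div_nonpos[OF \<Omega> U \<rho>\<Omega> \<rho>b \<rho>1 \<rho>2 XC bdX])
  define Q where "Q x = \<beta> * a x * (v x)\<^sup>2 * r x powr (\<beta> - 1) * (norm (grad r x))\<^sup>2" for x
  have pt: "\<phi> x * div_field Z1 x - \<psi> x * div_field Z2 x = div_field X x - Q x" if x: "x \<in> \<Omega>" for x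
  proof -
    have xU: "x \<in> U" using x OU by blast
    have d\<phi>: "(\<phi> has_derivative D\<phi> x) (at x)" using C1d_der[OF \<phi>C xU] .
    have d\<psi>: "(\<psi> has_derivative D\<psi> x) (at x)" using C1d_der[OF \<psi>C xU] .
    have dZ1: "(Z1 has_derivative DZ1 x) (at x)" using C1d_der[OF Z1 xU] .
    have dZ2: "(Z2 has_derivative DZ2 x) (at x)" using C1d_der[OF Z2 xU] .
    have dv: "(v has_derivative Dv x) (at x)" using C1d_der[OF v1 xU] .
    have dr: "(r has_derivative Dr x) (at x)" using C1d_der[OF r xU] .
    have dvs: "(vs has_derivative (\<lambda>h. r x * Dv x h + Dr x h * v x)) (at x)"
    proof -
      have "((\<lambda>y. r y * v y) has_derivative (\<lambda>h. r x * Dv x h + Dr x h * v x)) (at x)"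
        by (rule has_derivative_mult[OF dr dv])
      thus ?thesis by (rule has_derivative_transform_within_open[OF _ U(1) xU]) (use vsr in simp)
    qed
    have Dv: "Dv x h = grad v x \<bullet> h" for h using grad_inner[OF dv] by simp
    have Dr: "Dr x h = grad r x \<bullet> h" for h using grad_inner[OF dr] by simp
    have gvs1: "grad vs x \<bullet> grad r x = r x * (grad v x \<bullet> grad r x) + (grad r x \<bullet> grad r x) * v x"
      using grad_inner[OF dvs, of "grad r x"] by (simp add: Dv Dr)
    have gvs2: "grad vs x \<bullet> grad v x = r x * (grad v x \<bullet> grad v x) + (grad r x \<bullet> grad v x) * v x"
      using grad_inner[OF dvs, of "grad v x"] by (simp add: Dv Dr)
    have "div_field X x = (\<phi> x * div_field Z1 x + D\<phi> x (Z1 x)) - (\<psi> x * div_field Z2 x + D\<psi> x (Z2 x))"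
      unfolding X_def[abs_def]
      using div_diff[OF has_derivative_scaleR[OF d\<phi> dZ1] has_derivative_scaleR[OF d\<psi> dZ2]]
        div_scale[OF d\<phi> dZ1] div_scale[OF d\<psi> dZ2] by simp
    moreover have "D\<phi> x (Z1 x) - D\<psi> x (Z2 x) = Q x"
    proof -
      have e1: "D\<phi> x (Z1 x) = a x * (v x * r x * (0 - \<beta> * r x powr (\<beta> - 1) * (grad r x \<bullet> grad v x))
          + (v x * (grad r x \<bullet> grad v x) + (grad v x \<bullet> grad v x) * r x) * (1 - r x powr \<beta>))"
        unfolding D\<phi>_def Z1_def Dv Dr by (simp add: algebra_simps)
      have e2: "D\<psi> x (Z2 x) = a x * (v x * (0 - \<beta> * r x powr (\<beta> - 1) * (grad vs x \<bullet> grad r x))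
          + (grad vs x \<bullet> grad v x) * (1 - r x powr \<beta>))"
        unfolding D\<psi>_def Z2_def Dv Dr by (simp add: algebra_simps inner_commute)
      have e3: "grad r x \<bullet> grad v x = grad v x \<bullet> grad r x" by (rule inner_commute)
      show ?thesis unfolding e1 e2 gvs1 gvs2 Q_def power2_norm_eq_inner e3
        by (simp add: algebra_simps power2_eq_square)
    qed
    ultimately show ?thesis by simp
  qed
  have cl: "compact (closure \<Omega>)" using \<Omega>(2) compact_closure by blast
  have \<Omega>m: "\<Omega> \<in> sets lebesgue" using \<Omega>(1) by simp
  have intg: "f integrable_on \<Omega>" if "continuous_on U f" for f :: "'a \<Rightarrow> real"
    by (rule cont_integrable_sub[OF cl continuous_on_subset[OF that U(2)] closure_subset \<Omega>m])
  have iX: "div_field X integrable_on \<Omega>" by (rule intg[OF div_cont[OF XC]])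
  have iQ: "Q integrable_on \<Omega>" unfolding Q_def[abs_def]
    by (intro intg continuous_on_mult continuous_on_const continuous_on_power continuous_on_norm
        continuous_on_powr C1d_cont[OF a] C1d_cont[OF v1] C1d_cont[OF r] grad_cont[OF r]) (use rpos in auto)
  have "integral \<Omega> (\<lambda>x. \<phi> x * div_field Z1 x - \<psi> x * div_field Z2 x) = integral \<Omega> (\<lambda>x. div_field X x - Q x)"
    by (rule integral_cong) (rule pt)
  also have "\<dots> = integral \<Omega> (div_field X) - integral \<Omega> Q" by (rule integral_diff[OF iX iQ])
  also have "\<dots> \<le> - integral \<Omega> Q" using divX by simp
  finally show ?thesis unfolding Z1_def[abs_def] Z2_def[abs_def] Q_def[abs_def] .
qed



lemma Ck_cont: "Ck_on k U f \<Longrightarrow> continuous_on U f"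
  by (cases k) auto

lemma Ck_Suc_C1d:
  assumes "open U" "Ck_on (Suc k) U f"
  shows "C1d U f (\<lambda>x. frechet_derivative f (at x))"
proof (rule C1dI)
  fix x assume x: "x \<in> U"
  have "f differentiable_on U" using assms(2) by simp
  hence "f differentiable (at x)" using differentiable_on_eq_differentiable_at[OF assms(1)] x by blast
  thus "(f has_derivative frechet_derivative f (at x)) (at x)" by (rule frechet_derivative_works[THEN iffD1])
next
  fix h
  have "Ck_on k U (\<lambda>x. frechet_derivative f (at x) h)" using assms(2) by simp
  thus "continuous_on U (\<lambda>x. frechet_derivative f (at x) h)" by (rule Ck_cont)
qed

lemma Ck2_C2d:
  assumes "open U" "Ck_on 2 U f"
  shows "C2d U f (\<lambda>x. frechet_derivative f (at x))"
  unfolding C2d_def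
proof
  have "Ck_on (Suc 1) U f" using assms(2) by (simp add: numeral_2_eq_2)
  thus "C1d U f (\<lambda>x. frechet_derivative f (at x))" by (rule Ck_Suc_C1d[OF assms(1)])
  show "\<forall>h. \<exists>D. C1d U (\<lambda>x. frechet_derivative f (at x) h) D"
  proof
    fix h
    have "Ck_on (Suc 0) U (\<lambda>x. frechet_derivative f (at x) h)" using assms(2) by (simp add: numeral_2_eq_2)
    thus "\<exists>D. C1d U (\<lambda>x. frechet_derivative f (at x) h) D" using Ck_Suc_C1d[OF assms(1)] by blast
  qed
qed

lemma Ck1_C1d:
  assumes "open U" "Ck_on 1 U f"
  shows "C1d U f (\<lambda>x. frechet_derivative f (at x))"
proof -
  have "Ck_on (Suc 0) U f" using assms(2) by (simp only: One_nat_def)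
  thus ?thesis by (rule Ck_Suc_C1d[OF assms(1)])
qed

lemma C2d_subset: "C2d U f Df \<Longrightarrow> V \<subseteq> U \<Longrightarrow> C2d V f Df"
  unfolding C2d_def using C1d_subset by blast

lemma C2d_mult:
  assumes f: "C2d U f Df" and g: "C2d U g Dg"
  shows "C2d U (\<lambda>x. f x * g x) (\<lambda>x h. f x * Dg x h + Df x h * g x)"
  unfolding C2d_def
proof
  have f1: "C1d U f Df" and g1: "C1d U g Dg" using f g unfolding C2d_def by blast+
  show "C1d U (\<lambda>x. f x * g x) (\<lambda>x h. f x * Dg x h + Df x h * g x)" by (rule C1d_mult[OF f1 g1])
  show "\<forall>h. \<exists>D. C1d U (\<lambda>x. f x * Dg x h + Df x h * g x) D"
  proof
    fix h
    obtain D1 where D1: "C1d U (\<lambda>x. Df x h) D1" using f unfolding C2d_def by blast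
    obtain D2 where D2: "C1d U (\<lambda>x. Dg x h) D2" using g unfolding C2d_def by blast
    show "\<exists>D. C1d U (\<lambda>x. f x * Dg x h + Df x h * g x) D"
      using C1d_add[OF C1d_mult[OF f1 D2] C1d_mult[OF D1 g1]] by blast
  qed
qed

lemma C1d_inverse:
  fixes f :: "'a::real_normed_vector \<Rightarrow> real"
  assumes f: "C1d U f Df" and pos: "\<And>x. x \<in> U \<Longrightarrow> f x > 0"
  shows "C1d U (\<lambda>x. inverse (f x)) (\<lambda>x h. - (inverse (f x) ^ Suc (Suc 0)) * Df x h)"
proof -
  have d: "(inverse has_real_derivative - (inverse t ^ Suc (Suc 0))) (at t)" if "t \<in> {0<..}" for t :: real
    using DERIV_inverse[of t UNIV] that by simp
  have c: "continuous_on {0<..} (\<lambda>t::real. - (inverse t ^ Suc (Suc 0)))"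
    by (intro continuous_on_minus continuous_on_power continuous_on_inverse continuous_on_id) auto
  show ?thesis using C1d_comp_real[OF f _ open_greaterThan d c] pos by simp
qed

lemma C1d_divide:
  fixes f g :: "'a::real_normed_vector \<Rightarrow> real"
  assumes f: "C1d U f Df" and g: "C1d U g Dg" and pos: "\<And>x. x \<in> U \<Longrightarrow> g x > 0"
  shows "\<exists>D. C1d U (\<lambda>x. f x / g x) D"
proof -
  have A: "C1d U (\<lambda>x. f x * inverse (g x)) (\<lambda>x h. f x * (- (inverse (g x) ^ Suc (Suc 0)) * Dg x h) + Df x h * inverse (g x))"
    by (rule C1d_mult[OF f C1d_inverse[OF g pos]])
  show ?thesis unfolding divide_inverse using A by blast
qed

lemma C1d_comp_pair:
  fixes G :: "'a::euclidean_space \<times> real \<Rightarrow> real" and w :: "'a \<Rightarrow> real"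
  assumes G: "C1d V G DG" and w: "C1d U w Dw" and into: "\<And>y. y \<in> U \<Longrightarrow> (y, w y) \<in> V" and V: "open V"
  shows "C1d U (\<lambda>y. G (y, w y)) (\<lambda>y h. DG (y, w y) (h, Dw y h))"
proof (rule C1dI)
  fix y assume y: "y \<in> U"
  have p: "((\<lambda>y. (y, w y)) has_derivative (\<lambda>h. (h, Dw y h))) (at y)"
    by (rule has_derivative_Pair[OF has_derivative_ident C1d_der[OF w y]])
  show "((\<lambda>y. G (y, w y)) has_derivative (\<lambda>h. DG (y, w y) (h, Dw y h))) (at y)"
    by (rule has_derivative_compose[OF p C1d_der[OF G into[OF y]]])
next
  fix h
  have lin: "DG (y, w y) (h, Dw y h) = DG (y, w y) (h, 0) + Dw y h * DG (y, w y) (0, 1)" if y: "y \<in> U" for y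
  proof -
    have l: "linear (DG (y, w y))" using C1d_lin[OF G into[OF y]] .
    have "(h, Dw y h) = (h, 0) + Dw y h *\<^sub>R (0, 1)" by simp
    hence "DG (y, w y) (h, Dw y h) = DG (y, w y) ((h, 0) + Dw y h *\<^sub>R (0, 1))" by metis
    also have "\<dots> = DG (y, w y) (h, 0) + Dw y h * DG (y, w y) (0, 1)"
      by (subst linear_add[OF l], subst linear_scale[OF l]) simp
    finally show ?thesis .
  qed
  have pc: "continuous_on U (\<lambda>y. (y, w y))"
    by (intro continuous_on_Pair continuous_on_id C1d_cont[OF w])
  have c1: "continuous_on U (\<lambda>y. DG (y, w y) (h, 0))"
    by (rule continuous_on_compose2[OF C1d_dcont[OF G] pc]) (use into in \<open>simp add: image_subset_iff\<close>)
  have c2: "continuous_on U (\<lambda>y. DG (y, w y) (0, 1))"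
    by (rule continuous_on_compose2[OF C1d_dcont[OF G] pc]) (use into in \<open>simp add: image_subset_iff\<close>)
  have "continuous_on U (\<lambda>y. DG (y, w y) (h, 0) + Dw y h * DG (y, w y) (0, 1))"
    by (intro continuous_on_add continuous_on_mult c1 c2 C1d_dcont[OF w])
  moreover have "continuous_on U (\<lambda>y. DG (y, w y) (h, Dw y h)) = continuous_on U (\<lambda>y. DG (y, w y) (h, 0) + Dw y h * DG (y, w y) (0, 1))"
    by (rule continuous_on_cong) (simp_all add: lin)
  ultimately show "continuous_on U (\<lambda>y. DG (y, w y) (h, Dw y h))" by simp
qed

lemma C2d_comp_pair:
  fixes F :: "'a::euclidean_space \<times> real \<Rightarrow> real" and w :: "'a \<Rightarrow> real"
  assumes F: "C2d V F DF" and w: "C2d U w Dw" and into: "\<And>y. y \<in> U \<Longrightarrow> (y, w y) \<in> V"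
    and V: "open V" and U: "open U"
  shows "C2d U (\<lambda>y. F (y, w y)) (\<lambda>y h. DF (y, w y) (h, Dw y h))"
  unfolding C2d_def
proof
  have F1: "C1d V F DF" and w1: "C1d U w Dw" using F w unfolding C2d_def by blast+
  show "C1d U (\<lambda>y. F (y, w y)) (\<lambda>y h. DF (y, w y) (h, Dw y h))" by (rule C1d_comp_pair[OF F1 w1 into V])
  show "\<forall>h. \<exists>D. C1d U (\<lambda>y. DF (y, w y) (h, Dw y h)) D"
  proof
    fix h
    obtain D1 where D1: "C1d V (\<lambda>z. DF z (h, 0)) D1" using F unfolding C2d_def by blast
    obtain D2 where D2: "C1d V (\<lambda>z. DF z (0, 1)) D2" using F unfolding C2d_def by blast
    obtain D3 where D3: "C1d U (\<lambda>y. Dw y h) D3" using w unfolding C2d_def by blast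
    have A: "C1d U (\<lambda>y. DF (y, w y) (h, 0) + Dw y h * DF (y, w y) (0, 1))
        (\<lambda>y k. D1 (y, w y) (k, Dw y k) + (Dw y h * D2 (y, w y) (k, Dw y k) + D3 y k * DF (y, w y) (0, 1)))"
      by (rule C1d_add[OF C1d_comp_pair[OF D1 w1 into V] C1d_mult[OF D3 C1d_comp_pair[OF D2 w1 into V]]])
    have B: "DF (y, w y) (h, 0) + Dw y h * DF (y, w y) (0, 1) = DF (y, w y) (h, Dw y h)" if y: "y \<in> U" for y
    proof -
      have l: "linear (DF (y, w y))" using C1d_lin[OF F1 into[OF y]] .
      have "(h, Dw y h) = (h, 0) + Dw y h *\<^sub>R (0, 1)" by simp
      hence "DF (y, w y) (h, Dw y h) = DF (y, w y) ((h, 0) + Dw y h *\<^sub>R (0, 1))" by metis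
      also have "\<dots> = DF (y, w y) (h, 0) + Dw y h * DF (y, w y) (0, 1)"
        by (subst linear_add[OF l], subst linear_scale[OF l]) simp
      finally show ?thesis by (rule sym)
    qed
    show "\<exists>D. C1d U (\<lambda>y. DF (y, w y) (h, Dw y h)) D" using C1d_cong[OF A U B] by blast
  qed
qed

lemma normal_grad:
  assumes "(f has_derivative Df) (at x)" "grad \<rho> x \<noteq> 0"
    and "outward_normal \<Omega> x = grad \<rho> x /\<^sub>R norm (grad \<rho> x)"
  shows "grad f x \<bullet> grad \<rho> x = norm (grad \<rho> x) * normal_deriv \<Omega> f x"
proof -
  have "normal_deriv \<Omega> f x = Df (grad \<rho> x /\<^sub>R norm (grad \<rho> x))"
    unfolding normal_deriv_def assms(3) using frechet_derivative_at[OF assms(1)] by simp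
  also have "\<dots> = grad f x \<bullet> grad \<rho> x / norm (grad \<rho> x)"
    using grad_inner[OF assms(1), of "grad \<rho> x /\<^sub>R norm (grad \<rho> x)"] by (simp add: divide_inverse mult.commute)
  finally show ?thesis using assms(2) by simp
qed


lemma frac_cross:
  fixes a b p q :: real
  assumes "p > 0" "q > 0" "a / p \<le> b / q"
  shows "a * q \<le> b * p"
proof -
  have "a / p * (p * q) \<le> b / q * (p * q)" using assms by (intro mult_right_mono) auto
  thus ?thesis using assms by (simp add: field_simps)
qed

lemma setup_dom:
  fixes \<Omega> :: "'a::euclidean_space set"
  assumes dom: "smooth_bounded_domain \<Omega>" and \<rho>_def: "\<rho> = (SOME \<rho>. defining_function \<Omega> \<rho>)"
  shows "open \<Omega>" "bounded \<Omega>" "\<Omega> = {x. \<rho> x < 0}" "\<forall>x\<in>frontier \<Omega>. grad \<rho> x \<noteq> 0"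
    "\<exists>D\<rho>. C1d UNIV \<rho> D\<rho>" "\<exists>DN. C1d UNIV (grad \<rho>) DN" "\<And>x. outward_normal \<Omega> x = grad \<rho> x /\<^sub>R norm (grad \<rho> x)"
proof -
  have ex: "\<exists>\<rho>. defining_function \<Omega> \<rho>" using dom unfolding smooth_bounded_domain_def by blast
  have df: "defining_function \<Omega> \<rho>" unfolding \<rho>_def using someI_ex[OF ex] .
  have sm: "Ck_on 2 UNIV \<rho>" using df unfolding defining_function_def smooth_on_def by blast
  have c2: "C2d UNIV \<rho> (\<lambda>x. frechet_derivative \<rho> (at x))" by (rule Ck2_C2d[OF open_UNIV sm])
  show "\<exists>DN. C1d UNIV (grad \<rho>) DN" using grad_C1d[OF open_UNIV c2] .
  show "\<exists>D\<rho>. C1d UNIV \<rho> D\<rho>" using c2 unfolding C2d_def by blast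
  show "outward_normal \<Omega> x = grad \<rho> x /\<^sub>R norm (grad \<rho> x)" for x
    unfolding outward_normal_def \<rho>_def Let_def ..
  show "open \<Omega>" "bounded \<Omega>" using dom unfolding smooth_bounded_domain_def by blast+
  show "\<Omega> = {x. \<rho> x < 0}" using df unfolding defining_function_def by blast
  show "\<forall>x\<in>frontier \<Omega>. grad \<rho> x \<noteq> 0" using df unfolding defining_function_def by blast
qed

lemma open_pos:
  fixes f :: "'a::topological_space \<Rightarrow> real"
  assumes "open U" "continuous_on U f"
  shows "open {x\<in>U. f x > 0}"
proof -
  have "open (U \<inter> f -` {0<..})" by (rule continuous_open_preimage[OF assms(2,1) open_greaterThan])
  moreover have "U \<inter> f -` {0<..} = {x\<in>U. f x > 0}" by auto
  ultimately show ?thesis by simp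
qed


lemma part1_inner:
  fixes \<Omega> :: "'a::euclidean_space set"
    and w wst a c :: "'a \<Rightarrow> real" and \<beta> :: real and g :: "'a \<Rightarrow> real \<Rightarrow> real"
  assumes dom: "smooth_bounded_domain \<Omega>"
    and w_C2: "Ck_closure 2 (closure \<Omega>) w" and w_pos: "\<forall>x\<in>closure \<Omega>. w x > 0"
    and wst_C2: "Ck_closure 2 (closure \<Omega>) wst" and wst_pos: "\<forall>x\<in>closure \<Omega>. wst x > 0"
    and a_C1: "Ck_closure 1 (closure \<Omega>) a" and a_nonneg: "\<forall>x\<in>closure \<Omega>. a x \<ge> 0"
    and c_C2: "Ck_closure 2 (closure \<Omega>) c" and c_nonneg: "\<forall>x\<in>closure \<Omega>. c x \<ge> 0"
    and \<beta>: "\<beta> \<ge> 1"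
    and mono: "\<forall>x\<in>frontier \<Omega>. \<forall>u v. 0 < u \<longrightarrow> u \<le> v \<longrightarrow> g x v / (c x * v) \<le> g x u / (c x * u)"
    and bw: "\<forall>x\<in>frontier \<Omega>. normal_deriv \<Omega> (\<lambda>y. c y * w y) x = g x (w x)"
    and bws: "\<forall>x\<in>frontier \<Omega>. normal_deriv \<Omega> (\<lambda>y. c y * wst y) x = g x (wst x)"
  shows "integral \<Omega> (\<lambda>x. c x * wst x * (w x powr \<beta> - wst x powr \<beta>) / w x powr \<beta> *
          (div_field (\<lambda>y. a y *\<^sub>R grad (\<lambda>z. c z * w z) y) x
           - w x / wst x * div_field (\<lambda>y. a y *\<^sub>R grad (\<lambda>z. c z * wst z) y) x))
        \<le> - integral \<Omega> (\<lambda>x. \<beta> * a x * (c x)\<^sup>2 * (w x)\<^sup>2 * (wst x / w x) powr (\<beta> - 1)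
                 * (norm (grad (\<lambda>y. wst y / w y) x))\<^sup>2)
      \<and> - integral \<Omega> (\<lambda>x. \<beta> * a x * (c x)\<^sup>2 * (w x)\<^sup>2 * (wst x / w x) powr (\<beta> - 1)
                 * (norm (grad (\<lambda>y. wst y / w y) x))\<^sup>2) \<le> 0"
proof -
  define \<rho> where "\<rho> = (SOME \<rho>. defining_function \<Omega> \<rho>)"
  note SD = setup_dom[OF dom \<rho>_def]
  have \<Omega>o: "open \<Omega>" and \<Omega>b: "bounded \<Omega>" and \<rho>\<Omega>: "\<Omega> = {x. \<rho> x < 0}"
    and \<rho>b: "\<forall>x\<in>frontier \<Omega>. grad \<rho> x \<noteq> 0"
    and on: "\<And>x. outward_normal \<Omega> x = grad \<rho> x /\<^sub>R norm (grad \<rho> x)" using SD by auto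
  obtain D\<rho> where \<rho>1: "C1d UNIV \<rho> D\<rho>" using SD(5) by (elim exE)
  obtain DN where \<rho>2: "C1d UNIV (grad \<rho>) DN" using SD(6) by (elim exE)
  obtain Uw where Uw: "open Uw" "closure \<Omega> \<subseteq> Uw" "Ck_on 2 Uw w" using w_C2 unfolding Ck_closure_def by blast
  obtain Us where Us: "open Us" "closure \<Omega> \<subseteq> Us" "Ck_on 2 Us wst" using wst_C2 unfolding Ck_closure_def by blast
  obtain Ua where Ua: "open Ua" "closure \<Omega> \<subseteq> Ua" "Ck_on 1 Ua a" using a_C1 unfolding Ck_closure_def by blast
  obtain Uc where Uc: "open Uc" "closure \<Omega> \<subseteq> Uc" "Ck_on 2 Uc c" using c_C2 unfolding Ck_closure_def by blast
  define U0 where "U0 = Uw \<inter> Us \<inter> Ua \<inter> Uc"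
  have U0o: "open U0" unfolding U0_def using Uw Us Ua Uc by blast
  have U0s: "closure \<Omega> \<subseteq> U0" unfolding U0_def using Uw Us Ua Uc by blast
  have "U0 \<subseteq> Uw" unfolding U0_def by blast
  hence w0: "C2d U0 w (\<lambda>x. frechet_derivative w (at x))"
    by (rule C2d_subset[OF Ck2_C2d[OF Uw(1,3)]])
  have "U0 \<subseteq> Us" unfolding U0_def by blast
  hence s0: "C2d U0 wst (\<lambda>x. frechet_derivative wst (at x))"
    by (rule C2d_subset[OF Ck2_C2d[OF Us(1,3)]])
  have "U0 \<subseteq> Ua" unfolding U0_def by blast
  hence a0: "C1d U0 a (\<lambda>x. frechet_derivative a (at x))"
    by (rule C1d_subset[OF Ck1_C1d[OF Ua(1,3)]])
  have "U0 \<subseteq> Uc" unfolding U0_def by blast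
  hence c0: "C2d U0 c (\<lambda>x. frechet_derivative c (at x))"
    by (rule C2d_subset[OF Ck2_C2d[OF Uc(1,3)]])
  define U1 where "U1 = {x\<in>U0. w x > 0}"
  have w0': "C1d U0 w (\<lambda>x. frechet_derivative w (at x))" using w0 unfolding C2d_def by (rule conjunct1)
  have s0': "C1d U0 wst (\<lambda>x. frechet_derivative wst (at x))" using s0 unfolding C2d_def by (rule conjunct1)
  have U1o: "open U1" unfolding U1_def by (rule open_pos[OF U0o C1d_cont[OF w0']])
  define U where "U = {x\<in>U1. wst x > 0}"
  have U1U0: "U1 \<subseteq> U0" unfolding U1_def by blast
  have Uo: "open U" unfolding U_def by (rule open_pos[OF U1o C1d_cont[OF C1d_subset[OF s0' U1U0]]])
  have UU0: "U \<subseteq> U0" unfolding U_def U1_def by blast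
  have Us': "closure \<Omega> \<subseteq> U" unfolding U_def U1_def using U0s w_pos wst_pos by blast
  have wpU: "\<And>x. x \<in> U \<Longrightarrow> w x > 0" and spU: "\<And>x. x \<in> U \<Longrightarrow> wst x > 0" unfolding U_def U1_def by blast+
  have w: "C2d U w (\<lambda>x. frechet_derivative w (at x))" using C2d_subset[OF w0 UU0] .
  have s: "C2d U wst (\<lambda>x. frechet_derivative wst (at x))" using C2d_subset[OF s0 UU0] .
  have ca: "C1d U a (\<lambda>x. frechet_derivative a (at x))" using C1d_subset[OF a0 UU0] .
  have cc: "C2d U c (\<lambda>x. frechet_derivative c (at x))" using C2d_subset[OF c0 UU0] .
  define v where "v = (\<lambda>z. c z * w z)"
  define vs where "vs = (\<lambda>z. c z * wst z)"
  define r where "r = (\<lambda>y. wst y / w y)"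
  obtain Dv where v: "C2d U v Dv" unfolding v_def using C2d_mult[OF cc w] by blast
  obtain Dvs where vs: "C2d U vs Dvs" unfolding vs_def using C2d_mult[OF cc s] by blast
  have w1: "C1d U w (\<lambda>x. frechet_derivative w (at x))" using w unfolding C2d_def by blast
  have s1: "C1d U wst (\<lambda>x. frechet_derivative wst (at x))" using s unfolding C2d_def by blast
  obtain Dr where r: "C1d U r Dr" unfolding r_def using C1d_divide[OF s1 w1 wpU] by blast
  have rpos: "\<forall>x\<in>U. r x > 0" unfolding r_def using wpU spU by simp
  have vsr: "\<forall>x\<in>U. vs x = r x * v x"
  proof
    fix x assume "x \<in> U"
    hence "w x \<noteq> 0" using wpU by force
    thus "vs x = r x * v x" unfolding r_def v_def vs_def by (simp add: field_simps)
  qed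
  define \<phi> where "\<phi> x = c x * wst x * (w x powr \<beta> - wst x powr \<beta>) / w x powr \<beta>" for x
  define \<psi> where "\<psi> x = \<phi> x * (w x / wst x)" for x
  have \<phi>e: "\<forall>x\<in>U. \<phi> x = v x * r x * (1 - r x powr \<beta>)"
  proof
    fix x assume x: "x \<in> U"
    have wp: "w x powr \<beta> > 0" using wpU[OF x] by simp
    show "\<phi> x = v x * r x * (1 - r x powr \<beta>)"
      unfolding \<phi>_def v_def r_def powr_divide using wp wpU[OF x] by (simp add: field_simps)
  qed
  have \<psi>e: "\<forall>x\<in>U. \<psi> x = v x * (1 - r x powr \<beta>)"
  proof
    fix x assume x: "x \<in> U"
    have "\<psi> x = v x * r x * (1 - r x powr \<beta>) * (w x / wst x)" unfolding \<psi>_def using \<phi>e x by simp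
    also have "\<dots> = v x * (1 - r x powr \<beta>)" unfolding r_def using wpU[OF x] spU[OF x] by (simp add: field_simps)
    finally show "\<psi> x = v x * (1 - r x powr \<beta>)" .
  qed
  have FU: "frontier \<Omega> \<subseteq> U" using Us' frontier_def by blast
  have FC: "frontier \<Omega> \<subseteq> closure \<Omega>" using frontier_def by blast
  have bd: "\<forall>x\<in>frontier \<Omega>. a x * (\<phi> x * (grad v x \<bullet> grad \<rho> x) - \<psi> x * (grad vs x \<bullet> grad \<rho> x)) \<le> 0"
  proof
    fix x assume xF: "x \<in> frontier \<Omega>"
    have xU: "x \<in> U" using xF FU by blast
    have xC: "x \<in> closure \<Omega>" using xF FC by blast
    define n where "n = norm (grad \<rho> x)"
    have n: "n > 0" unfolding n_def using \<rho>b xF by simp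
    have e1: "grad v x \<bullet> grad \<rho> x = n * g x (w x)"
      unfolding n_def using normal_grad[OF C1d_der[OF v[unfolded C2d_def, THEN conjunct1] xU] _ on] \<rho>b xF bw
      unfolding v_def by simp
    have e2: "grad vs x \<bullet> grad \<rho> x = n * g x (wst x)"
      unfolding n_def using normal_grad[OF C1d_der[OF vs[unfolded C2d_def, THEN conjunct1] xU] _ on] \<rho>b xF bws
      unfolding vs_def by simp
    define R where "R = r x powr \<beta>"
    have wx: "w x > 0" and sx: "wst x > 0" using xU wpU spU by auto
    have \<phi>x: "\<phi> x = c x * wst x * (1 - R)" using \<phi>e xU wx unfolding R_def v_def r_def by simp
    have \<psi>x: "\<psi> x = c x * w x * (1 - R)" using \<psi>e xU unfolding R_def v_def by simp
    have key: "c x * (1 - R) * (wst x * g x (w x) - w x * g x (wst x)) \<le> 0"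
    proof (cases "c x = 0")
      case True thus ?thesis by simp
    next
      case False
      hence cp: "c x > 0" using c_nonneg xC by force
      show ?thesis
      proof (cases "wst x \<le> w x")
        case True
        have "r x \<le> 1" unfolding r_def using True wx by simp
        hence "R \<le> 1" unfolding R_def using \<beta> rpos xU by (intro powr_le1) auto
        moreover have "g x (w x) / (c x * w x) \<le> g x (wst x) / (c x * wst x)"
          using mono xF sx True by blast
        hence "g x (w x) * (c x * wst x) \<le> g x (wst x) * (c x * w x)"
          by (rule frac_cross[rotated 2]) (use cp wx sx in auto)
        hence "c x * (wst x * g x (w x) - w x * g x (wst x)) \<le> 0" by (simp add: algebra_simps)
        ultimately have "(1 - R) * (c x * (wst x * g x (w x) - w x * g x (wst x))) \<le> 0"
          by (intro mult_nonneg_nonpos[of "1 - R"]) auto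
        thus ?thesis by (simp add: algebra_simps)
      next
        case False
        have "r x \<ge> 1" unfolding r_def using False wx by simp
        hence "R \<ge> 1" unfolding R_def using \<beta> by (intro ge_one_powr_ge_zero) auto
        moreover have "g x (wst x) / (c x * wst x) \<le> g x (w x) / (c x * w x)"
          using mono xF wx False by force
        hence "g x (wst x) * (c x * w x) \<le> g x (w x) * (c x * wst x)"
          by (rule frac_cross[rotated 2]) (use cp wx sx in auto)
        hence "c x * (wst x * g x (w x) - w x * g x (wst x)) \<ge> 0" by (simp add: algebra_simps)
        ultimately have "(1 - R) * (c x * (wst x * g x (w x) - w x * g x (wst x))) \<le> 0"
          by (intro mult_nonpos_nonneg[of "1 - R"]) auto
        thus ?thesis by (simp add: algebra_simps)
      qed
    qed
    have "a x * (\<phi> x * (grad v x \<bullet> grad \<rho> x) - \<psi> x * (grad vs x \<bullet> grad \<rho> x))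
        = (a x * n) * (c x * (1 - R) * (wst x * g x (w x) - w x * g x (wst x)))"
      unfolding e1 e2 \<phi>x \<psi>x by (simp add: algebra_simps)
    also have "\<dots> \<le> 0" using key a_nonneg xC n by (intro mult_nonneg_nonpos[of "a x * n"]) auto
    finally show "a x * (\<phi> x * (grad v x \<bullet> grad \<rho> x) - \<psi> x * (grad vs x \<bullet> grad \<rho> x)) \<le> 0" .
  qed
  have main: "integral \<Omega> (\<lambda>x. \<phi> x * div_field (\<lambda>y. a y *\<^sub>R grad v y) x - \<psi> x * div_field (\<lambda>y. a y *\<^sub>R grad vs y) x)
      \<le> - integral \<Omega> (\<lambda>x. \<beta> * a x * (v x)\<^sup>2 * r x powr (\<beta> - 1) * (norm (grad r x))\<^sup>2)"
    by (rule core[OF \<Omega>o \<Omega>b Uo Us' \<rho>\<Omega> \<rho>b \<rho>1 \<rho>2 v vs ca r rpos vsr \<phi>e \<psi>e bd])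
  have L: "(\<lambda>x. c x * wst x * (w x powr \<beta> - wst x powr \<beta>) / w x powr \<beta> *
          (div_field (\<lambda>y. a y *\<^sub>R grad (\<lambda>z. c z * w z) y) x
           - w x / wst x * div_field (\<lambda>y. a y *\<^sub>R grad (\<lambda>z. c z * wst z) y) x))
      = (\<lambda>x. \<phi> x * div_field (\<lambda>y. a y *\<^sub>R grad v y) x - \<psi> x * div_field (\<lambda>y. a y *\<^sub>R grad vs y) x)"
    unfolding \<phi>_def[abs_def] \<psi>_def[abs_def] v_def vs_def by (rule ext) (simp add: algebra_simps)
  have R: "(\<lambda>x. \<beta> * a x * (c x)\<^sup>2 * (w x)\<^sup>2 * (wst x / w x) powr (\<beta> - 1) * (norm (grad (\<lambda>y. wst y / w y) x))\<^sup>2)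
      = (\<lambda>x. \<beta> * a x * (v x)\<^sup>2 * r x powr (\<beta> - 1) * (norm (grad r x))\<^sup>2)"
    unfolding v_def r_def by (rule ext) (simp add: power_mult_distrib)
  show "integral \<Omega> (\<lambda>x. c x * wst x * (w x powr \<beta> - wst x powr \<beta>) / w x powr \<beta> *
          (div_field (\<lambda>y. a y *\<^sub>R grad (\<lambda>z. c z * w z) y) x
           - w x / wst x * div_field (\<lambda>y. a y *\<^sub>R grad (\<lambda>z. c z * wst z) y) x))
        \<le> - integral \<Omega> (\<lambda>x. \<beta> * a x * (c x)\<^sup>2 * (w x)\<^sup>2 * (wst x / w x) powr (\<beta> - 1)
                 * (norm (grad (\<lambda>y. wst y / w y) x))\<^sup>2)
      \<and> - integral \<Omega> (\<lambda>x. \<beta> * a x * (c x)\<^sup>2 * (w x)\<^sup>2 * (wst x / w x) powr (\<beta> - 1)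
                 * (norm (grad (\<lambda>y. wst y / w y) x))\<^sup>2) \<le> 0"
  proof
    show "integral \<Omega> (\<lambda>x. c x * wst x * (w x powr \<beta> - wst x powr \<beta>) / w x powr \<beta> *
          (div_field (\<lambda>y. a y *\<^sub>R grad (\<lambda>z. c z * w z) y) x
           - w x / wst x * div_field (\<lambda>y. a y *\<^sub>R grad (\<lambda>z. c z * wst z) y) x))
        \<le> - integral \<Omega> (\<lambda>x. \<beta> * a x * (c x)\<^sup>2 * (w x)\<^sup>2 * (wst x / w x) powr (\<beta> - 1)
                 * (norm (grad (\<lambda>y. wst y / w y) x))\<^sup>2)"
      unfolding L R by (rule main)
    let ?Q = "\<lambda>x. \<beta> * a x * (c x)\<^sup>2 * (w x)\<^sup>2 * (wst x / w x) powr (\<beta> - 1) * (norm (grad (\<lambda>y. wst y / w y) x))\<^sup>2"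
    have "0 \<le> integral \<Omega> ?Q"
    proof (cases "?Q integrable_on \<Omega>")
      case True
      show ?thesis
      proof (rule integral_nonneg[OF True])
        fix x assume "x \<in> \<Omega>"
        hence "a x \<ge> 0" using a_nonneg closure_subset by blast
        thus "0 \<le> ?Q x" using \<beta> by simp
      qed
    next
      case False thus ?thesis by (simp add: not_integrable_integral)
    qed
    thus "- integral \<Omega> ?Q \<le> 0" by simp
  qed
qed


lemma part1:
  fixes \<Omega> :: "'a::euclidean_space set"
    and w wst a c :: "'a \<Rightarrow> real"
  assumes dom: "smooth_bounded_domain \<Omega>"
    and w_C2: "Ck_closure 2 (closure \<Omega>) w" and w_pos: "\<forall>x\<in>closure \<Omega>. w x > 0"
    and wst_C2: "Ck_closure 2 (closure \<Omega>) wst" and wst_pos: "\<forall>x\<in>closure \<Omega>. wst x > 0"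
    and a_C1: "Ck_closure 1 (closure \<Omega>) a" and a_nonneg: "\<forall>x\<in>closure \<Omega>. a x \<ge> 0"
    and c_C2: "Ck_closure 2 (closure \<Omega>) c" and c_nonneg: "\<forall>x\<in>closure \<Omega>. c x \<ge> 0"
  shows
   "(\<forall>(\<beta>::real) (g :: 'a \<Rightarrow> real \<Rightarrow> real).
      \<beta> \<ge> 1 \<longrightarrow> C01_boundary (frontier \<Omega>) g \<longrightarrow>
      (\<forall>x\<in>frontier \<Omega>. \<forall>u v. 0 < u \<longrightarrow> u \<le> v \<longrightarrow> g x v / (c x * v) \<le> g x u / (c x * u)) \<longrightarrow>
      (\<forall>x\<in>frontier \<Omega>. normal_deriv \<Omega> (\<lambda>y. c y * w y) x = g x (w x)) \<longrightarrow>
      (\<forall>x\<in>frontier \<Omega>. normal_deriv \<Omega> (\<lambda>y. c y * wst y) x = g x (wst x)) \<longrightarrow>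
      integral \<Omega> (\<lambda>x. c x * wst x * (w x powr \<beta> - wst x powr \<beta>) / w x powr \<beta> *
          (div_field (\<lambda>y. a y *\<^sub>R grad (\<lambda>z. c z * w z) y) x
           - w x / wst x * div_field (\<lambda>y. a y *\<^sub>R grad (\<lambda>z. c z * wst z) y) x))
        \<le> - integral \<Omega> (\<lambda>x. \<beta> * a x * (c x)\<^sup>2 * (w x)\<^sup>2 * (wst x / w x) powr (\<beta> - 1)
                 * (norm (grad (\<lambda>y. wst y / w y) x))\<^sup>2)
      \<and> - integral \<Omega> (\<lambda>x. \<beta> * a x * (c x)\<^sup>2 * (w x)\<^sup>2 * (wst x / w x) powr (\<beta> - 1)
                 * (norm (grad (\<lambda>y. wst y / w y) x))\<^sup>2) \<le> 0)"
  apply (intro allI impI)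
  apply (rule part1_inner[OF assms])
  apply assumption+
  done

lemma part2_inner:
  fixes \<Omega> :: "'a::euclidean_space set"
    and w wst a :: "'a \<Rightarrow> real" and \<Phi> :: "'a \<Rightarrow> real \<Rightarrow> real" and g :: "'a \<Rightarrow> real \<Rightarrow> real"
  assumes dom: "smooth_bounded_domain \<Omega>"
    and w_C2: "Ck_closure 2 (closure \<Omega>) w" and w_pos: "\<forall>x\<in>closure \<Omega>. w x > 0"
    and wst_C2: "Ck_closure 2 (closure \<Omega>) wst" and wst_pos: "\<forall>x\<in>closure \<Omega>. wst x > 0"
    and a_C1: "Ck_closure 1 (closure \<Omega>) a" and a_nonneg: "\<forall>x\<in>closure \<Omega>. a x \<ge> 0"
    and \<Phi>C: "C22_closure (closure \<Omega>) \<Phi>"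
    and \<Phi>0: "\<forall>x\<in>closure \<Omega>. \<Phi> x 0 = 0"
    and \<Phi>d: "\<forall>x\<in>closure \<Omega>. \<forall>u>0. deriv (\<Phi> x) u > 0"
    and mono: "\<forall>x\<in>frontier \<Omega>. \<forall>u v. 0 < u \<longrightarrow> u \<le> v \<longrightarrow> g x v / \<Phi> x v \<le> g x u / \<Phi> x u"
    and bw: "\<forall>x\<in>frontier \<Omega>. normal_deriv \<Omega> (\<lambda>y. \<Phi> y (w y)) x = g x (w x)"
    and bws: "\<forall>x\<in>frontier \<Omega>. normal_deriv \<Omega> (\<lambda>y. \<Phi> y (wst y)) x = g x (wst x)"
  shows "integral \<Omega> (\<lambda>x. \<Phi> x (wst x) * (\<Phi> x (w x) - \<Phi> x (wst x)) / \<Phi> x (w x) *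
          (div_field (\<lambda>y. a y *\<^sub>R grad (\<lambda>z. \<Phi> z (w z)) y) x
           - \<Phi> x (w x) / \<Phi> x (wst x) * div_field (\<lambda>y. a y *\<^sub>R grad (\<lambda>z. \<Phi> z (wst z)) y) x))
        \<le> - integral \<Omega> (\<lambda>x. a x * (\<Phi> x (w x))\<^sup>2 * (norm (grad (\<lambda>y. \<Phi> y (wst y) / \<Phi> y (w y)) x))\<^sup>2)
      \<and> - integral \<Omega> (\<lambda>x. a x * (\<Phi> x (w x))\<^sup>2 * (norm (grad (\<lambda>y. \<Phi> y (wst y) / \<Phi> y (w y)) x))\<^sup>2) \<le> 0"
proof -
  define \<rho> where "\<rho> = (SOME \<rho>. defining_function \<Omega> \<rho>)"
  note SD = setup_dom[OF dom \<rho>_def]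
  have \<Omega>o: "open \<Omega>" and \<Omega>b: "bounded \<Omega>" and \<rho>\<Omega>: "\<Omega> = {x. \<rho> x < 0}"
    and \<rho>b: "\<forall>x\<in>frontier \<Omega>. grad \<rho> x \<noteq> 0"
    and on: "\<And>x. outward_normal \<Omega> x = grad \<rho> x /\<^sub>R norm (grad \<rho> x)" using SD by auto
  obtain D\<rho> where \<rho>1: "C1d UNIV \<rho> D\<rho>" using SD(5) by (elim exE)
  obtain DN where \<rho>2: "C1d UNIV (grad \<rho>) DN" using SD(6) by (elim exE)
  obtain Uw where Uw: "open Uw" "closure \<Omega> \<subseteq> Uw" "Ck_on 2 Uw w" using w_C2 unfolding Ck_closure_def by blast
  obtain Us where Us: "open Us" "closure \<Omega> \<subseteq> Us" "Ck_on 2 Us wst" using wst_C2 unfolding Ck_closure_def by blast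
  obtain Ua where Ua: "open Ua" "closure \<Omega> \<subseteq> Ua" "Ck_on 1 Ua a" using a_C1 unfolding Ck_closure_def by blast
  define F where "F = (\<lambda>(x::'a, u::real). \<Phi> x u)"
  obtain UP where UP: "open UP" "closure \<Omega> \<times> {0..} \<subseteq> UP" "Ck_on 2 UP F"
    using \<Phi>C unfolding C22_closure_def F_def by blast
  define DF where "DF z = frechet_derivative F (at z)" for z
  have F2: "C2d UP F DF" unfolding DF_def[abs_def] by (rule Ck2_C2d[OF UP(1,3)])
  have F1: "C1d UP F DF" using F2 unfolding C2d_def by (rule conjunct1)
  have Fxu: "F (x, u) = \<Phi> x u" for x u unfolding F_def by simp
  have inUP: "(x, u) \<in> UP" if "x \<in> closure \<Omega>" "u \<ge> 0" for x u using UP(2) that by blast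
  have dP: "((\<Phi> x) has_real_derivative DF (x, u) (0, 1)) (at u)" if "x \<in> closure \<Omega>" "u \<ge> 0" for x u
  proof -
    have p: "((\<lambda>t. (x, t)) has_derivative (\<lambda>h. (0, h))) (at u)"
      by (rule has_derivative_Pair[OF has_derivative_const has_derivative_ident])
    have "((\<lambda>t. F (x, t)) has_derivative (\<lambda>h. DF (x, u) (0, h))) (at u)"
      by (rule has_derivative_compose[OF p C1d_der[OF F1 inUP[OF that]]])
    moreover have eqf: "(\<lambda>h. DF (x, u) (0, h)) = (\<lambda>h. DF (x, u) (0, 1) * h)"
    proof (rule ext)
      fix h
      have l: "linear (DF (x, u))" using C1d_lin[OF F1 inUP[OF that]] .
      have "(0::'a, h) = h *\<^sub>R (0, 1)" by simp
      hence "DF (x, u) (0, h) = DF (x, u) (h *\<^sub>R (0, 1))" by (rule arg_cong)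
      also have "\<dots> = h * DF (x, u) (0, 1)" by (subst linear_scale[OF l]) simp
      finally show "DF (x, u) (0, h) = DF (x, u) (0, 1) * h" by (simp only: mult.commute)
    qed
    ultimately have "((\<lambda>t. F (x, t)) has_derivative (\<lambda>h. DF (x, u) (0, 1) * h)) (at u)" by (simp only:)
    thus ?thesis unfolding has_field_derivative_def Fxu by simp
  qed
  have dpos: "DF (x, u) (0, 1) > 0" if "x \<in> closure \<Omega>" "u > 0" for x u
  proof -
    have "deriv (\<Phi> x) u = DF (x, u) (0, 1)" using DERIV_imp_deriv[OF dP[OF that(1)]] that(2) by simp
    moreover have "deriv (\<Phi> x) u > 0" using \<Phi>d that by blast
    ultimately show ?thesis by simp
  qed
  have smono: "\<Phi> x u1 < \<Phi> x u2" if x: "x \<in> closure \<Omega>" and u: "0 \<le> u1" "u1 < u2" for x u1 u2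
  proof -
    have "\<exists>z. u1 < z \<and> z < u2 \<and> \<Phi> x u2 - \<Phi> x u1 = (u2 - u1) * DF (x, z) (0, 1)"
    proof (rule MVT2[OF u(2)])
      fix t assume t: "u1 \<le> t" "t \<le> u2"
      show "(\<Phi> x has_real_derivative DF (x, t) (0, 1)) (at t)"
        by (rule dP[OF x]) (use u(1) t in linarith)
    qed
    then obtain z where z: "u1 < z" "z < u2" "\<Phi> x u2 - \<Phi> x u1 = (u2 - u1) * DF (x, z) (0, 1)"
      by blast
    have "z > 0" using z u by linarith
    hence "DF (x, z) (0, 1) > 0" by (rule dpos[OF x])
    hence "(u2 - u1) * DF (x, z) (0, 1) > 0" using u by simp
    thus ?thesis using z by simp
  qed
  have mono_le: "\<Phi> x u1 \<le> \<Phi> x u2" if x: "x \<in> closure \<Omega>" and u: "0 \<le> u1" "u1 \<le> u2" for x u1 u2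
  proof (cases "u1 = u2")
    case False
    hence "u1 < u2" using u by linarith
    thus ?thesis using smono[OF x u(1)] by (simp add: less_imp_le)
  qed simp
  have Ppos: "\<Phi> x u > 0" if x: "x \<in> closure \<Omega>" and u: "u > 0" for x u
    using smono[OF x _ u] \<Phi>0 x by simp
  define U0 where "U0 = Uw \<inter> Us \<inter> Ua"
  have U0o: "open U0" unfolding U0_def using Uw Us Ua by blast
  have U0s: "closure \<Omega> \<subseteq> U0" unfolding U0_def using Uw Us Ua by blast
  have "U0 \<subseteq> Uw" unfolding U0_def by blast
  hence w0: "C2d U0 w (\<lambda>x. frechet_derivative w (at x))" by (rule C2d_subset[OF Ck2_C2d[OF Uw(1,3)]])
  have "U0 \<subseteq> Us" unfolding U0_def by blast
  hence s0: "C2d U0 wst (\<lambda>x. frechet_derivative wst (at x))" by (rule C2d_subset[OF Ck2_C2d[OF Us(1,3)]])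
  have "U0 \<subseteq> Ua" unfolding U0_def by blast
  hence a0: "C1d U0 a (\<lambda>x. frechet_derivative a (at x))" by (rule C1d_subset[OF Ck1_C1d[OF Ua(1,3)]])
  have w0': "C1d U0 w (\<lambda>x. frechet_derivative w (at x))" using w0 unfolding C2d_def by (rule conjunct1)
  have s0': "C1d U0 wst (\<lambda>x. frechet_derivative wst (at x))" using s0 unfolding C2d_def by (rule conjunct1)
  define U1a where "U1a = U0 \<inter> (\<lambda>y. (y, w y)) -` UP"
  have U1ao: "open U1a" unfolding U1a_def
    by (rule continuous_open_preimage[OF continuous_on_Pair[OF continuous_on_id C1d_cont[OF w0']] U0o UP(1)])
  have U1aU0: "U1a \<subseteq> U0" unfolding U1a_def by blast
  define U1 where "U1 = U1a \<inter> (\<lambda>y. (y, wst y)) -` UP"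
  have U1o: "open U1" unfolding U1_def
    by (rule continuous_open_preimage[OF continuous_on_Pair[OF continuous_on_id C1d_cont[OF C1d_subset[OF s0' U1aU0]]] U1ao UP(1)])
  have U1U0: "U1 \<subseteq> U0" unfolding U1_def using U1aU0 by blast
  have intow: "(y, w y) \<in> UP" if "y \<in> U1" for y using that unfolding U1_def U1a_def by blast
  have intos: "(y, wst y) \<in> UP" if "y \<in> U1" for y using that unfolding U1_def U1a_def by blast
  define v where "v = (\<lambda>y. \<Phi> y (w y))"
  define vs where "vs = (\<lambda>y. \<Phi> y (wst y))"
  have v1: "C2d U1 v (\<lambda>y h. DF (y, w y) (h, frechet_derivative w (at y) h))"
    using C2d_comp_pair[OF F2 C2d_subset[OF w0 U1U0] intow UP(1) U1o] unfolding v_def Fxu .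
  have vs1: "C2d U1 vs (\<lambda>y h. DF (y, wst y) (h, frechet_derivative wst (at y) h))"
    using C2d_comp_pair[OF F2 C2d_subset[OF s0 U1U0] intos UP(1) U1o] unfolding vs_def Fxu .
  have v1c: "continuous_on U1 v" using v1 unfolding C2d_def using C1d_cont by blast
  have vs1c: "continuous_on U1 vs" using vs1 unfolding C2d_def using C1d_cont by blast
  define U2 where "U2 = {x\<in>U1. v x > 0}"
  have U2o: "open U2" unfolding U2_def by (rule open_pos[OF U1o v1c])
  have U2U1: "U2 \<subseteq> U1" unfolding U2_def by blast
  define U where "U = {x\<in>U2. vs x > 0}"
  have Uo: "open U" unfolding U_def by (rule open_pos[OF U2o continuous_on_subset[OF vs1c U2U1]])
  have UU1: "U \<subseteq> U1" unfolding U_def using U2U1 by blast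
  have UU0: "U \<subseteq> U0" using UU1 U1U0 by blast
  have Us': "closure \<Omega> \<subseteq> U"
  proof
    fix x assume x: "x \<in> closure \<Omega>"
    have "x \<in> U0" using x U0s by blast
    moreover have "(x, w x) \<in> UP" using inUP[OF x] w_pos x by force
    moreover have "(x, wst x) \<in> UP" using inUP[OF x] wst_pos x by force
    moreover have "v x > 0" unfolding v_def using Ppos[OF x] w_pos x by blast
    moreover have "vs x > 0" unfolding vs_def using Ppos[OF x] wst_pos x by blast
    ultimately show "x \<in> U" unfolding U_def U2_def U1_def U1a_def by blast
  qed
  have vpU: "\<And>x. x \<in> U \<Longrightarrow> v x > 0" and spU: "\<And>x. x \<in> U \<Longrightarrow> vs x > 0" unfolding U_def U2_def by blast+
  obtain Dv where v: "C2d U v Dv" using C2d_subset[OF v1 UU1] by blast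
  obtain Dvs where vs: "C2d U vs Dvs" using C2d_subset[OF vs1 UU1] by blast
  have ca: "C1d U a (\<lambda>x. frechet_derivative a (at x))" using C1d_subset[OF a0 UU0] .
  define r where "r = (\<lambda>y. \<Phi> y (wst y) / \<Phi> y (w y))"
  have vv: "C1d U v Dv" using v unfolding C2d_def by (rule conjunct1)
  have vvs: "C1d U vs Dvs" using vs unfolding C2d_def by (rule conjunct1)
  obtain Dr where r: "C1d U r Dr" unfolding r_def using C1d_divide[OF vvs vv vpU] unfolding v_def vs_def by blast
  have rpos: "\<forall>x\<in>U. r x > 0" unfolding r_def using vpU spU unfolding v_def vs_def by simp
  have vsr: "\<forall>x\<in>U. vs x = r x * v x"
  proof
    fix x assume "x \<in> U"
    hence "v x \<noteq> 0" using vpU by force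
    thus "vs x = r x * v x" unfolding r_def v_def vs_def by (simp add: field_simps)
  qed
  define \<phi> where "\<phi> x = \<Phi> x (wst x) * (\<Phi> x (w x) - \<Phi> x (wst x)) / \<Phi> x (w x)" for x
  define \<psi> where "\<psi> x = \<phi> x * (\<Phi> x (w x) / \<Phi> x (wst x))" for x
  have \<phi>e: "\<forall>x\<in>U. \<phi> x = v x * r x * (1 - r x powr 1)"
  proof
    fix x assume x: "x \<in> U"
    have "r x > 0" using rpos x by blast
    hence r1: "r x powr 1 = r x" by (simp add: powr_one)
    have "v x \<noteq> 0" using vpU x by force
    thus "\<phi> x = v x * r x * (1 - r x powr 1)" unfolding r1 unfolding \<phi>_def r_def v_def by (simp add: field_simps)
  qed
  have \<psi>e: "\<forall>x\<in>U. \<psi> x = v x * (1 - r x powr 1)"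
  proof
    fix x assume x: "x \<in> U"
    have "r x > 0" using rpos x by blast
    hence r1: "r x powr 1 = r x" by (simp add: powr_one)
    have "v x \<noteq> 0" "vs x \<noteq> 0" using vpU spU x by force+
    thus "\<psi> x = v x * (1 - r x powr 1)" unfolding r1 unfolding \<psi>_def \<phi>_def r_def v_def vs_def
      by (simp add: field_simps)
  qed
  have FU: "frontier \<Omega> \<subseteq> U" using Us' frontier_def by blast
  have FC: "frontier \<Omega> \<subseteq> closure \<Omega>" using frontier_def by blast
  have bd: "\<forall>x\<in>frontier \<Omega>. a x * (\<phi> x * (grad v x \<bullet> grad \<rho> x) - \<psi> x * (grad vs x \<bullet> grad \<rho> x)) \<le> 0"
  proof
    fix x assume xF: "x \<in> frontier \<Omega>"
    have xU: "x \<in> U" using xF FU by blast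
    have xC: "x \<in> closure \<Omega>" using xF FC by blast
    define n where "n = norm (grad \<rho> x)"
    have n: "n > 0" unfolding n_def using \<rho>b xF by simp
    have e1: "grad v x \<bullet> grad \<rho> x = n * g x (w x)"
      unfolding n_def using normal_grad[OF C1d_der[OF vv xU] _ on] \<rho>b xF bw
      unfolding v_def by simp
    have e2: "grad vs x \<bullet> grad \<rho> x = n * g x (wst x)"
      unfolding n_def using normal_grad[OF C1d_der[OF vvs xU] _ on] \<rho>b xF bws
      unfolding vs_def by simp
    have wx: "w x > 0" and sx: "wst x > 0" using xC w_pos wst_pos by auto
    have vx: "v x > 0" and vsx: "vs x > 0" using xU vpU spU by auto
    have \<phi>x: "\<phi> x = vs x * (v x - vs x) / v x" unfolding \<phi>_def v_def vs_def ..
    have "\<psi> x = vs x * (v x - vs x) / v x * (v x / vs x)" unfolding \<psi>_def \<phi>x unfolding v_def vs_def ..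
    also have "\<dots> = v x - vs x" using vx vsx by (simp add: field_simps)
    finally have \<psi>x: "\<psi> x = v x - vs x" .
    have key: "(v x - vs x) * (vs x * g x (w x) - v x * g x (wst x)) \<le> 0"
    proof (cases "wst x \<le> w x")
      case True
      have A: "v x - vs x \<ge> 0" unfolding v_def vs_def using mono_le[OF xC _ True] sx by simp
      have "g x (w x) / \<Phi> x (w x) \<le> g x (wst x) / \<Phi> x (wst x)" using mono xF sx True by blast
      hence "g x (w x) * vs x \<le> g x (wst x) * v x"
        unfolding v_def vs_def by (rule frac_cross[rotated 2]) (use vx vsx in \<open>auto simp: v_def vs_def\<close>)
      hence B: "vs x * g x (w x) - v x * g x (wst x) \<le> 0" by (simp add: algebra_simps)
      show ?thesis using mult_nonneg_nonpos[OF A B] .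
    next
      case False
      have A: "v x - vs x \<le> 0" unfolding v_def vs_def using mono_le[OF xC _, of "w x" "wst x"] wx False by simp
      have "g x (wst x) / \<Phi> x (wst x) \<le> g x (w x) / \<Phi> x (w x)" using mono xF wx False by force
      hence "g x (wst x) * v x \<le> g x (w x) * vs x"
        unfolding v_def vs_def by (rule frac_cross[rotated 2]) (use vx vsx in \<open>auto simp: v_def vs_def\<close>)
      hence B: "vs x * g x (w x) - v x * g x (wst x) \<ge> 0" by (simp add: algebra_simps)
      show ?thesis using mult_nonpos_nonneg[OF A B] .
    qed
    have "a x * (\<phi> x * (grad v x \<bullet> grad \<rho> x) - \<psi> x * (grad vs x \<bullet> grad \<rho> x))
        = (a x * n / v x) * ((v x - vs x) * (vs x * g x (w x) - v x * g x (wst x)))"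
      unfolding e1 e2 \<phi>x \<psi>x using vx by (simp add: field_simps)
    also have "\<dots> \<le> 0"
    proof (rule mult_nonneg_nonpos[OF _ key])
      show "0 \<le> a x * n / v x" using a_nonneg xC n vx by simp
    qed
    finally show "a x * (\<phi> x * (grad v x \<bullet> grad \<rho> x) - \<psi> x * (grad vs x \<bullet> grad \<rho> x)) \<le> 0" .
  qed
  have main: "integral \<Omega> (\<lambda>x. \<phi> x * div_field (\<lambda>y. a y *\<^sub>R grad v y) x - \<psi> x * div_field (\<lambda>y. a y *\<^sub>R grad vs y) x)
      \<le> - integral \<Omega> (\<lambda>x. 1 * a x * (v x)\<^sup>2 * r x powr (1 - 1) * (norm (grad r x))\<^sup>2)"
    by (rule core[OF \<Omega>o \<Omega>b Uo Us' \<rho>\<Omega> \<rho>b \<rho>1 \<rho>2 v vs ca r rpos vsr \<phi>e \<psi>e bd])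
  have L: "(\<lambda>x. \<Phi> x (wst x) * (\<Phi> x (w x) - \<Phi> x (wst x)) / \<Phi> x (w x) *
          (div_field (\<lambda>y. a y *\<^sub>R grad (\<lambda>z. \<Phi> z (w z)) y) x
           - \<Phi> x (w x) / \<Phi> x (wst x) * div_field (\<lambda>y. a y *\<^sub>R grad (\<lambda>z. \<Phi> z (wst z)) y) x))
      = (\<lambda>x. \<phi> x * div_field (\<lambda>y. a y *\<^sub>R grad v y) x - \<psi> x * div_field (\<lambda>y. a y *\<^sub>R grad vs y) x)"
  proof (rule ext)
    fix x
    have e: "\<Phi> x (wst x) * (\<Phi> x (w x) - \<Phi> x (wst x)) / \<Phi> x (w x) = \<phi> x" unfolding \<phi>_def ..
    show "\<Phi> x (wst x) * (\<Phi> x (w x) - \<Phi> x (wst x)) / \<Phi> x (w x) *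
          (div_field (\<lambda>y. a y *\<^sub>R grad (\<lambda>z. \<Phi> z (w z)) y) x
           - \<Phi> x (w x) / \<Phi> x (wst x) * div_field (\<lambda>y. a y *\<^sub>R grad (\<lambda>z. \<Phi> z (wst z)) y) x)
      = \<phi> x * div_field (\<lambda>y. a y *\<^sub>R grad v y) x - \<psi> x * div_field (\<lambda>y. a y *\<^sub>R grad vs y) x"
      unfolding e \<psi>_def v_def vs_def by (simp only: right_diff_distrib mult.assoc)
  qed
  have OU: "\<Omega> \<subseteq> U" using Us' closure_subset by blast
  have R: "integral \<Omega> (\<lambda>x. 1 * a x * (v x)\<^sup>2 * r x powr (1 - 1) * (norm (grad r x))\<^sup>2)
      = integral \<Omega> (\<lambda>x. a x * (\<Phi> x (w x))\<^sup>2 * (norm (grad (\<lambda>y. \<Phi> y (wst y) / \<Phi> y (w y)) x))\<^sup>2)"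
  proof (rule integral_cong)
    fix x assume "x \<in> \<Omega>"
    hence "r x \<noteq> 0" using rpos OU by force
    thus "1 * a x * (v x)\<^sup>2 * r x powr (1 - 1) * (norm (grad r x))\<^sup>2
        = a x * (\<Phi> x (w x))\<^sup>2 * (norm (grad (\<lambda>y. \<Phi> y (wst y) / \<Phi> y (w y)) x))\<^sup>2"
      unfolding v_def r_def by simp
  qed
  let ?Q = "\<lambda>x. a x * (\<Phi> x (w x))\<^sup>2 * (norm (grad (\<lambda>y. \<Phi> y (wst y) / \<Phi> y (w y)) x))\<^sup>2"
  have "0 \<le> integral \<Omega> ?Q"
  proof (cases "?Q integrable_on \<Omega>")
    case True
    show ?thesis
    proof (rule integral_nonneg[OF True])
      fix x assume "x \<in> \<Omega>"
      hence "a x \<ge> 0" using a_nonneg closure_subset by blast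
      thus "0 \<le> ?Q x" by simp
    qed
  next
    case False thus ?thesis by (simp add: not_integrable_integral)
  qed
  thus ?thesis using main unfolding L R by simp
qed

lemma part2:
  fixes \<Omega> :: "'a::euclidean_space set"
    and w wst a c :: "'a \<Rightarrow> real"
  assumes dom: "smooth_bounded_domain \<Omega>"
    and w_C2: "Ck_closure 2 (closure \<Omega>) w" and w_pos: "\<forall>x\<in>closure \<Omega>. w x > 0"
    and wst_C2: "Ck_closure 2 (closure \<Omega>) wst" and wst_pos: "\<forall>x\<in>closure \<Omega>. wst x > 0"
    and a_C1: "Ck_closure 1 (closure \<Omega>) a" and a_nonneg: "\<forall>x\<in>closure \<Omega>. a x \<ge> 0"
    and c_C2: "Ck_closure 2 (closure \<Omega>) c" and c_nonneg: "\<forall>x\<in>closure \<Omega>. c x \<ge> 0"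
  shows "(\<forall>(\<Phi> :: 'a \<Rightarrow> real \<Rightarrow> real) (g :: 'a \<Rightarrow> real \<Rightarrow> real).
      C22_closure (closure \<Omega>) \<Phi> \<longrightarrow>
      (\<forall>x\<in>closure \<Omega>. \<Phi> x 0 = 0) \<longrightarrow>
      (\<forall>x\<in>closure \<Omega>. \<forall>u>0. deriv (\<Phi> x) u > 0) \<longrightarrow>
      C01_boundary (frontier \<Omega>) g \<longrightarrow>
      (\<forall>x\<in>frontier \<Omega>. \<forall>u v. 0 < u \<longrightarrow> u \<le> v \<longrightarrow> g x v / \<Phi> x v \<le> g x u / \<Phi> x u) \<longrightarrow>
      (\<forall>x\<in>frontier \<Omega>. normal_deriv \<Omega> (\<lambda>y. \<Phi> y (w y)) x = g x (w x)) \<longrightarrow>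
      (\<forall>x\<in>frontier \<Omega>. normal_deriv \<Omega> (\<lambda>y. \<Phi> y (wst y)) x = g x (wst x)) \<longrightarrow>
      integral \<Omega> (\<lambda>x. \<Phi> x (wst x) * (\<Phi> x (w x) - \<Phi> x (wst x)) / \<Phi> x (w x) *
          (div_field (\<lambda>y. a y *\<^sub>R grad (\<lambda>z. \<Phi> z (w z)) y) x
           - \<Phi> x (w x) / \<Phi> x (wst x) * div_field (\<lambda>y. a y *\<^sub>R grad (\<lambda>z. \<Phi> z (wst z)) y) x))
        \<le> - integral \<Omega> (\<lambda>x. a x * (\<Phi> x (w x))\<^sup>2 * (norm (grad (\<lambda>y. \<Phi> y (wst y) / \<Phi> y (w y)) x))\<^sup>2)
      \<and> - integral \<Omega> (\<lambda>x. a x * (\<Phi> x (w x))\<^sup>2 * (norm (grad (\<lambda>y. \<Phi> y (wst y) / \<Phi> y (w y)) x))\<^sup>2) \<le> 0)"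
  apply (intro allI impI)
  apply (rule part2_inner[OF assms(1-7)])
  apply assumption+
  done

theorem lemma2p3:
  fixes \<Omega> :: "'a::euclidean_space set"
    and w wst a c :: "'a \<Rightarrow> real"
  assumes dom: "smooth_bounded_domain \<Omega>"
    and w_C2: "Ck_closure 2 (closure \<Omega>) w" and w_pos: "\<forall>x\<in>closure \<Omega>. w x > 0"
    and wst_C2: "Ck_closure 2 (closure \<Omega>) wst" and wst_pos: "\<forall>x\<in>closure \<Omega>. wst x > 0"
    and a_C1: "Ck_closure 1 (closure \<Omega>) a" and a_nonneg: "\<forall>x\<in>closure \<Omega>. a x \<ge> 0"
    and c_C2: "Ck_closure 2 (closure \<Omega>) c" and c_nonneg: "\<forall>x\<in>closure \<Omega>. c x \<ge> 0"
  shows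
   "(\<forall>(\<beta>::real) (g :: 'a \<Rightarrow> real \<Rightarrow> real).
      \<beta> \<ge> 1 \<longrightarrow> C01_boundary (frontier \<Omega>) g \<longrightarrow>
      (\<forall>x\<in>frontier \<Omega>. \<forall>u v. 0 < u \<longrightarrow> u \<le> v \<longrightarrow> g x v / (c x * v) \<le> g x u / (c x * u)) \<longrightarrow>
      (\<forall>x\<in>frontier \<Omega>. normal_deriv \<Omega> (\<lambda>y. c y * w y) x = g x (w x)) \<longrightarrow>
      (\<forall>x\<in>frontier \<Omega>. normal_deriv \<Omega> (\<lambda>y. c y * wst y) x = g x (wst x)) \<longrightarrow>
      integral \<Omega> (\<lambda>x. c x * wst x * (w x powr \<beta> - wst x powr \<beta>) / w x powr \<beta> *
          (div_field (\<lambda>y. a y *\<^sub>R grad (\<lambda>z. c z * w z) y) x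
           - w x / wst x * div_field (\<lambda>y. a y *\<^sub>R grad (\<lambda>z. c z * wst z) y) x))
        \<le> - integral \<Omega> (\<lambda>x. \<beta> * a x * (c x)\<^sup>2 * (w x)\<^sup>2 * (wst x / w x) powr (\<beta> - 1)
                 * (norm (grad (\<lambda>y. wst y / w y) x))\<^sup>2)
      \<and> - integral \<Omega> (\<lambda>x. \<beta> * a x * (c x)\<^sup>2 * (w x)\<^sup>2 * (wst x / w x) powr (\<beta> - 1)
                 * (norm (grad (\<lambda>y. wst y / w y) x))\<^sup>2) \<le> 0)
  \<and> (\<forall>(\<Phi> :: 'a \<Rightarrow> real \<Rightarrow> real) (g :: 'a \<Rightarrow> real \<Rightarrow> real).
      C22_closure (closure \<Omega>) \<Phi> \<longrightarrow>
      (\<forall>x\<in>closure \<Omega>. \<Phi> x 0 = 0) \<longrightarrow>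
      (\<forall>x\<in>closure \<Omega>. \<forall>u>0. deriv (\<Phi> x) u > 0) \<longrightarrow>
      C01_boundary (frontier \<Omega>) g \<longrightarrow>
      (\<forall>x\<in>frontier \<Omega>. \<forall>u v. 0 < u \<longrightarrow> u \<le> v \<longrightarrow> g x v / \<Phi> x v \<le> g x u / \<Phi> x u) \<longrightarrow>
      (\<forall>x\<in>frontier \<Omega>. normal_deriv \<Omega> (\<lambda>y. \<Phi> y (w y)) x = g x (w x)) \<longrightarrow>
      (\<forall>x\<in>frontier \<Omega>. normal_deriv \<Omega> (\<lambda>y. \<Phi> y (wst y)) x = g x (wst x)) \<longrightarrow>
      integral \<Omega> (\<lambda>x. \<Phi> x (wst x) * (\<Phi> x (w x) - \<Phi> x (wst x)) / \<Phi> x (w x) *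
          (div_field (\<lambda>y. a y *\<^sub>R grad (\<lambda>z. \<Phi> z (w z)) y) x
           - \<Phi> x (w x) / \<Phi> x (wst x) * div_field (\<lambda>y. a y *\<^sub>R grad (\<lambda>z. \<Phi> z (wst z)) y) x))
        \<le> - integral \<Omega> (\<lambda>x. a x * (\<Phi> x (w x))\<^sup>2 * (norm (grad (\<lambda>y. \<Phi> y (wst y) / \<Phi> y (w y)) x))\<^sup>2)
      \<and> - integral \<Omega> (\<lambda>x. a x * (\<Phi> x (w x))\<^sup>2 * (norm (grad (\<lambda>y. \<Phi> y (wst y) / \<Phi> y (w y)) x))\<^sup>2) \<le> 0)"
  using part1[OF assms] part2[OF assms] by (rule conjI)

end
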